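(* Assume the standing assumptions listed in the context, and in addition that $\frac1\beta\bigl(\mu_0+\Delta\phi_0-B(\phi_0)-\pi(\phi_0)\bigr)\in V$ and $\phi_Q,\sigma_Q\in H^1(0,T;H)$. Let $(u,\tau)\in\mathcal U_{ad}\times[0,T]$ be an admissible control pair with corresponding state $(\mu,\phi,\sigma)=\mathcal S(u)$. Then the reduced cost functional $\mathcal J_{\rm red}$ is Fréchet differentiable with respect to the time variable $\tau$, and $$D_\tau\mathcal J_{\rm red}(u,\tau)=\frac{b_1}2\int_\Omega|\phi(\tau)-\phi_Q(\tau)|^2+b_2\int_\Omega(\phi(\tau)-\phi_\Omega)\partial_t\phi(\tau)+\frac{b_3}2\int_\Omega|\sigma(\tau)-\sigma_Q(\tau)|^2+\frac{b_4}2\int_\Omega\partial_t\phi(\tau)+b_5+b_6(\tau-\tau_* ).$$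
   Context: Let $\Omega\subset\mathbb{R}^3$ be a smooth bounded domain with boundary $\Gamma$, $T>0$, $Q_t=\Omega\times(0,t)$, $Q=Q_T$, $\Sigma=\Gamma\times(0,T)$, $\partial_{\mathbf n}$ the outward normal derivative. Set $H=L^2(\Omega)$, $V=H^1(\Omega)$, $W=\{v\in H^2(\Omega):\partial_{\mathbf n}v=0\text{ on }\Gamma\}$. Standing assumptions: $\alpha,\beta>0$; $b_0,\dots,b_6$ are nonnegative constants, not all zero; $\phi_Q,\sigma_Q\in L^2(Q)$, $\phi_\Omega\in L^2(\Omega)$; $\tau_*\in[0,T]$; $P\in C^2(\mathbb{R})$ is nonnegative, bounded, with bounded derivative, and Lipschitz continuous; $F=\hat B+\hat\pi$ is nonnegative, where $\hat B:\mathbb{R}\to[0,+\infty]$ is convex and lower semicontinuous with $\hat B(0)=0$, $\hat\pi\in C^3(\mathbb{R})$ and $\pi:=\hat\pi'$ is Lipschitz; $B:=\partial\hat B$ has domain $(r_-,r_+)$ with $-\infty\le r_-<0<r_+\le+\infty$, $F|_{(r_-,r_+)}\in C^3(r_-,r_+)$ and $\lim_{r\to r_\pm}F'(r)=\pm\infty$; $\phi_0\in W$, $\mu_0\in V\cap L^\infty(\Omega)$, $\sigma_0\in V$, $F(\phi_0)\in L^1(\Omega)$, $r_-<\inf\phi_0\le\sup\phi_0<r_+$; $u_*,u^*\in L^\infty(Q)$ with $u_*\le u^*$ a.e.; $\mathcal U_{ad}:=\{u\in L^\infty(Q):u_*\le u\le u^*\text{ a.e. in }Q\}$; $\mathcal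 U_R\subset L^2(Q)$ is a nonempty bounded open set containing $\mathcal U_{ad}$ with $\|u\|_{L^2(Q)}\le R$ on $\mathcal U_R$. State system for a control $u$: $\alpha\partial_t\mu+\partial_t\phi-\Delta\mu=P(\phi)(\sigma-\mu)$, $\mu=\beta\partial_t\phi-\Delta\phi+F'(\phi)$, $\partial_t\sigma-\Delta\sigma=-P(\phi)(\sigma-\mu)+u$ in $Q$; homogeneous Neumann conditions for $\mu,\phi,\sigma$ on $\Sigma$; $\mu(0)=\mu_0,\phi(0)=\phi_0,\sigma(0)=\sigma_0$. For each $u\in\mathcal U_R$ it has a unique solution $\mathcal S(u)=(\mathcal S_1(u),\mathcal S_2(u),\mathcal S_3(u))=(\mu,\phi,\sigma)$ with $\mu,\sigma\in H^1(0,T;H)\cap L^\infty(0,T;V)\cap L^2(0,T;W)$ and (under the additional assumption above) $\phi\in W^{1,\infty}(0,T;V)\cap H^2(0,T;H)\subset C^1([0,T];H)$. Cost functional: $\mathcal J(\phi,\sigma,u,\tau)=\frac{b_1}2\int_{Q_\tau}|\phi-\phi_Q|^2+\frac{b_2}2\int_\Omega|\phi(\tau)-\phi_\Omega|^2+\frac{b_3}2\int_{Q_\tau}|\sigma-\sigma_Q|^2+\frac{b_4}2\int_\Omega(1+\phi(\tau))+b_5\tau+\frac{b_6}2|\tau-\tau_*|^2+\frac{b_0}2\int_Q|u|^2$. Reduced cost functional: $\mathcal J_{\rm red}(u,\tau)=\mathcal J(\mathcal S_2(u),\mathcal S_3(u),u,\tau)$. *)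

theory Defs
  imports "HOL-Analysis.Analysis"
begin

primrec Ck_on :: "nat \<Rightarrow> 'a::euclidean_space set \<Rightarrow> ('a \<Rightarrow> real) \<Rightarrow> bool" where
  "Ck_on 0 S f = continuous_on S f"
| "Ck_on (Suc k) S f = ((\<forall>x\<in>S. f differentiable (at x)) \<and>
      (\<forall>i\<in>Basis. Ck_on k S (\<lambda>x. frechet_derivative f (at x) i)))"

definition smooth :: "('a::euclidean_space \<Rightarrow> real) \<Rightarrow> bool" where
  "smooth f \<longleftrightarrow> (\<forall>k. Ck_on k UNIV f)"

definition smooth_bounded_domain :: "'a::euclidean_space set \<Rightarrow> bool" where
  "smooth_bounded_domain \<Omega> \<longleftrightarrow> open \<Omega> \<and> connected \<Omega> \<and> bounded \<Omega> \<and> \<Omega> \<noteq> {} \<and>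
     (\<forall>p\<in>frontier \<Omega>. \<exists>r>0. \<exists>\<rho>. smooth \<rho> \<and>
        (\<forall>x\<in>ball p r. x \<in> \<Omega> \<longleftrightarrow> \<rho> x < 0) \<and>
        (\<forall>x\<in>ball p r. \<exists>i\<in>Basis. frechet_derivative \<rho> (at x) i \<noteq> 0))"

definition L2 :: "'a::euclidean_space set \<Rightarrow> ('a \<Rightarrow> real) \<Rightarrow> bool" where
  "L2 \<Omega> f \<longleftrightarrow> f \<in> borel_measurable (lebesgue_on \<Omega>) \<and> integrable (lebesgue_on \<Omega>) (\<lambda>x. (f x)\<^sup>2)"

definition Linf :: "'a::euclidean_space set \<Rightarrow> ('a \<Rightarrow> real) \<Rightarrow> bool" where
  "Linf \<Omega> f \<longleftrightarrow> f \<in> borel_measurable (lebesgue_on \<Omega>) \<and> (\<exists>C. AE x in lebesgue_on \<Omega>. \<bar>f x\<bar> \<le> C)"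

definition Hnorm :: "'a::euclidean_space set \<Rightarrow> ('a \<Rightarrow> real) \<Rightarrow> real" where
  "Hnorm \<Omega> f = sqrt (\<integral>x. (f x)\<^sup>2 \<partial>lebesgue_on \<Omega>)"

definition test_fun :: "'a::euclidean_space set \<Rightarrow> ('a \<Rightarrow> real) \<Rightarrow> bool" where
  "test_fun \<Omega> \<psi> \<longleftrightarrow> smooth \<psi> \<and> compact (closure {x. \<psi> x \<noteq> 0}) \<and> closure {x. \<psi> x \<noteq> 0} \<subseteq> \<Omega>"

definition weak_deriv :: "'a::euclidean_space set \<Rightarrow> ('a \<Rightarrow> real) \<Rightarrow> 'a \<Rightarrow> ('a \<Rightarrow> real) \<Rightarrow> bool" where
  "weak_deriv \<Omega> f i g \<longleftrightarrow> (\<forall>\<psi>. test_fun \<Omega> \<psi> \<longrightarrow>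
     (\<integral>x. f x * frechet_derivative \<psi> (at x) i \<partial>lebesgue_on \<Omega>) = - (\<integral>x. g x * \<psi> x \<partial>lebesgue_on \<Omega>))"

definition wd :: "'a::euclidean_space set \<Rightarrow> ('a \<Rightarrow> real) \<Rightarrow> 'a \<Rightarrow> ('a \<Rightarrow> real)" where
  "wd \<Omega> f i = (SOME g. L2 \<Omega> g \<and> weak_deriv \<Omega> f i g)"

definition H1 :: "'a::euclidean_space set \<Rightarrow> ('a \<Rightarrow> real) \<Rightarrow> bool" where
  "H1 \<Omega> f \<longleftrightarrow> L2 \<Omega> f \<and> (\<forall>i\<in>Basis. \<exists>g. L2 \<Omega> g \<and> weak_deriv \<Omega> f i g)"

definition H2 :: "'a::euclidean_space set \<Rightarrow> ('a \<Rightarrow> real) \<Rightarrow> bool" where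
  "H2 \<Omega> f \<longleftrightarrow> H1 \<Omega> f \<and> (\<forall>i\<in>Basis. H1 \<Omega> (wd \<Omega> f i))"

definition lap :: "'a::euclidean_space set \<Rightarrow> ('a \<Rightarrow> real) \<Rightarrow> 'a \<Rightarrow> real" where
  "lap \<Omega> f = (\<lambda>x. \<Sum>i\<in>Basis. wd \<Omega> (wd \<Omega> f i) i x)"

definition Vnorm :: "'a::euclidean_space set \<Rightarrow> ('a \<Rightarrow> real) \<Rightarrow> real" where
  "Vnorm \<Omega> f = sqrt ((Hnorm \<Omega> f)\<^sup>2 + (\<Sum>i\<in>Basis. (Hnorm \<Omega> (wd \<Omega> f i))\<^sup>2))"

definition Wnorm :: "'a::euclidean_space set \<Rightarrow> ('a \<Rightarrow> real) \<Rightarrow> real" where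
  "Wnorm \<Omega> f = sqrt ((Vnorm \<Omega> f)\<^sup>2 + (\<Sum>i\<in>Basis. \<Sum>j\<in>Basis. (Hnorm \<Omega> (wd \<Omega> (wd \<Omega> f i) j))\<^sup>2))"

text \<open>W = {v in H^2 : normal derivative of v vanishes on the boundary}; the homogeneous
  Neumann condition is expressed through Green's formula.\<close>
definition Wsp :: "'a::euclidean_space set \<Rightarrow> ('a \<Rightarrow> real) \<Rightarrow> bool" where
  "Wsp \<Omega> v \<longleftrightarrow> H2 \<Omega> v \<and> (\<forall>w. H1 \<Omega> w \<longrightarrow>
     (\<integral>x. lap \<Omega> v x * w x \<partial>lebesgue_on \<Omega>) =
       - (\<integral>x. (\<Sum>i\<in>Basis. wd \<Omega> v i x * wd \<Omega> w i x) \<partial>lebesgue_on \<Omega>))"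

section \<open>Time-dependent functions  f :: real => space => real  (f t = value at time t)\<close>

definition meas_Q :: "'a::euclidean_space set \<Rightarrow> real \<Rightarrow> (real \<Rightarrow> 'a \<Rightarrow> real) \<Rightarrow> bool" where
  "meas_Q \<Omega> T f \<longleftrightarrow> (\<lambda>(x,t). f t x) \<in> borel_measurable (lebesgue_on (\<Omega> \<times> {0<..<T}))"

definition L2Q :: "'a::euclidean_space set \<Rightarrow> real \<Rightarrow> (real \<Rightarrow> 'a \<Rightarrow> real) \<Rightarrow> bool" where
  "L2Q \<Omega> T f \<longleftrightarrow> meas_Q \<Omega> T f \<and> integrable (lebesgue_on (\<Omega> \<times> {0<..<T})) (\<lambda>(x,t). (f t x)\<^sup>2)"

definition LinfQ :: "'a::euclidean_space set \<Rightarrow> real \<Rightarrow> (real \<Rightarrow> 'a \<Rightarrow> real) \<Rightarrow> bool" where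
  "LinfQ \<Omega> T f \<longleftrightarrow> meas_Q \<Omega> T f \<and> (\<exists>C. AE p in lebesgue_on (\<Omega> \<times> {0<..<T}). \<bar>(\<lambda>(x,t). f t x) p\<bar> \<le> C)"

text \<open>L^2(0,T;X) and L^infinity(0,T;X) for X in {H,V,W}, given membership predicate and norm.\<close>
definition L2t :: "'a::euclidean_space set \<Rightarrow> real \<Rightarrow> (('a \<Rightarrow> real) \<Rightarrow> bool) \<Rightarrow> (('a \<Rightarrow> real) \<Rightarrow> real)
    \<Rightarrow> (real \<Rightarrow> 'a \<Rightarrow> real) \<Rightarrow> bool" where
  "L2t \<Omega> T X N f \<longleftrightarrow> meas_Q \<Omega> T f \<and> (AE t in lebesgue_on {0<..<T}. X (f t)) \<and>
     (\<integral>\<^sup>+ t. ennreal ((N (f t))\<^sup>2) \<partial>lebesgue_on {0<..<T}) < \<infinity>"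

definition Linft :: "'a::euclidean_space set \<Rightarrow> real \<Rightarrow> (('a \<Rightarrow> real) \<Rightarrow> bool) \<Rightarrow> (('a \<Rightarrow> real) \<Rightarrow> real)
    \<Rightarrow> (real \<Rightarrow> 'a \<Rightarrow> real) \<Rightarrow> bool" where
  "Linft \<Omega> T X N f \<longleftrightarrow> meas_Q \<Omega> T f \<and> (AE t in lebesgue_on {0<..<T}. X (f t)) \<and>
     (\<exists>C. AE t in lebesgue_on {0<..<T}. N (f t) \<le> C)"

definition tderiv :: "'a::euclidean_space set \<Rightarrow> real \<Rightarrow> (real \<Rightarrow> 'a \<Rightarrow> real) \<Rightarrow> (real \<Rightarrow> 'a \<Rightarrow> real) \<Rightarrow> bool" where
  "tderiv \<Omega> T f g \<longleftrightarrow> (\<forall>\<zeta> v. test_fun {0<..<T} \<zeta> \<and> L2 \<Omega> v \<longrightarrow>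
     (\<integral>t. (\<integral>x. f t x * v x \<partial>lebesgue_on \<Omega>) * deriv \<zeta> t \<partial>lebesgue_on {0<..<T}) =
     - (\<integral>t. (\<integral>x. g t x * v x \<partial>lebesgue_on \<Omega>) * \<zeta> t \<partial>lebesgue_on {0<..<T}))"

definition H1tH :: "'a::euclidean_space set \<Rightarrow> real \<Rightarrow> (real \<Rightarrow> 'a \<Rightarrow> real) \<Rightarrow> (real \<Rightarrow> 'a \<Rightarrow> real) \<Rightarrow> bool" where
  "H1tH \<Omega> T f g \<longleftrightarrow> L2t \<Omega> T (L2 \<Omega>) (Hnorm \<Omega>) f \<and> L2t \<Omega> T (L2 \<Omega>) (Hnorm \<Omega>) g \<and> tderiv \<Omega> T f g"

definition CH :: "'a::euclidean_space set \<Rightarrow> real \<Rightarrow> (real \<Rightarrow> 'a \<Rightarrow> real) \<Rightarrow> bool" where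
  "CH \<Omega> T f \<longleftrightarrow> (\<forall>t\<in>{0..T}. L2 \<Omega> (f t)) \<and>
     (\<forall>t\<in>{0..T}. ((\<lambda>s. Hnorm \<Omega> (\<lambda>x. f s x - f t x)) \<longlongrightarrow> 0) (at t within {0..T}))"

definition ereal_convex :: "(real \<Rightarrow> ereal) \<Rightarrow> bool" where
  "ereal_convex f \<longleftrightarrow> (\<forall>x y l. 0 \<le> l \<and> l \<le> 1 \<longrightarrow>
     f (l * x + (1 - l) * y) \<le> ereal l * f x + ereal (1 - l) * f y)"

definition ereal_lsc :: "(real \<Rightarrow> ereal) \<Rightarrow> bool" where
  "ereal_lsc f \<longleftrightarrow> (\<forall>x. f x \<le> Liminf (at x) f)"

definition subdiff_dom :: "(real \<Rightarrow> ereal) \<Rightarrow> real set" where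
  "subdiff_dom f = {x. f x \<noteq> \<infinity> \<and> (\<exists>s. \<forall>y. f x + ereal (s * (y - x)) \<le> f y)}"

definition ereal_interval :: "ereal \<Rightarrow> ereal \<Rightarrow> real set" where
  "ereal_interval a b = {r. a < ereal r \<and> ereal r < b}"

definition left_filter :: "ereal \<Rightarrow> real filter" where
  "left_filter b = (if b = \<infinity> then at_top else at_left (real_of_ereal b))"

definition right_filter :: "ereal \<Rightarrow> real filter" where
  "right_filter a = (if a = -\<infinity> then at_bot else at_right (real_of_ereal a))"

text \<open>F' on (r_-,r_+), where F = B_hat + pi_hat is finite.\<close>
definition Fprime :: "(real \<Rightarrow> ereal) \<Rightarrow> (real \<Rightarrow> real) \<Rightarrow> real \<Rightarrow> real" where
  "Fprime Bh pih = deriv (\<lambda>r. real_of_ereal (Bh r + ereal (pih r)))"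

definition state_sol :: "'a::euclidean_space set \<Rightarrow> real \<Rightarrow> real \<Rightarrow> real \<Rightarrow> (real \<Rightarrow> real)
   \<Rightarrow> (real \<Rightarrow> ereal) \<Rightarrow> (real \<Rightarrow> real) \<Rightarrow> ereal \<Rightarrow> ereal
   \<Rightarrow> ('a \<Rightarrow> real) \<Rightarrow> ('a \<Rightarrow> real) \<Rightarrow> ('a \<Rightarrow> real) \<Rightarrow> (real \<Rightarrow> 'a \<Rightarrow> real)
   \<Rightarrow> (real \<Rightarrow> 'a \<Rightarrow> real) \<Rightarrow> (real \<Rightarrow> 'a \<Rightarrow> real) \<Rightarrow> (real \<Rightarrow> 'a \<Rightarrow> real)
   \<Rightarrow> (real \<Rightarrow> 'a \<Rightarrow> real) \<Rightarrow> (real \<Rightarrow> 'a \<Rightarrow> real) \<Rightarrow> (real \<Rightarrow> 'a \<Rightarrow> real) \<Rightarrow> bool" where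
  "state_sol \<Omega> T \<alpha> \<beta> P Bh pih rm rp \<mu>0 \<phi>0 \<sigma>0 u \<mu> \<phi> \<sigma> d\<mu> d\<phi> d\<sigma> \<longleftrightarrow>
     \<comment> \<open>regularity of mu and sigma: H^1(0,T;H) \<inter> L^\<infinity>(0,T;V) \<inter> L^2(0,T;W)\<close>
     H1tH \<Omega> T \<mu> d\<mu> \<and> Linft \<Omega> T (H1 \<Omega>) (Vnorm \<Omega>) \<mu> \<and> L2t \<Omega> T (Wsp \<Omega>) (Wnorm \<Omega>) \<mu> \<and>
     H1tH \<Omega> T \<sigma> d\<sigma> \<and> Linft \<Omega> T (H1 \<Omega>) (Vnorm \<Omega>) \<sigma> \<and> L2t \<Omega> T (Wsp \<Omega>) (Wnorm \<Omega>) \<sigma> \<and>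
     \<comment> \<open>regularity of phi: W^{1,\<infinity>}(0,T;V) \<inter> H^2(0,T;H)\<close>
     Linft \<Omega> T (H1 \<Omega>) (Vnorm \<Omega>) \<phi> \<and> Linft \<Omega> T (H1 \<Omega>) (Vnorm \<Omega>) d\<phi> \<and> tderiv \<Omega> T \<phi> d\<phi> \<and>
     H1tH \<Omega> T \<phi> d\<phi> \<and> (\<exists>dd\<phi>. H1tH \<Omega> T d\<phi> dd\<phi>) \<and>
     \<comment> \<open>homogeneous Neumann conditions (phi(t), mu(t), sigma(t) in W for a.e. t)\<close>
     (AE t in lebesgue_on {0<..<T}. Wsp \<Omega> (\<mu> t) \<and> Wsp \<Omega> (\<phi> t) \<and> Wsp \<Omega> (\<sigma> t)) \<and>
     \<comment> \<open>the equations, a.e. in Q\<close>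
     (AE t in lebesgue_on {0<..<T}. AE x in lebesgue_on \<Omega>.
        ereal (\<phi> t x) \<in> {rm<..<rp} \<and>
        \<alpha> * d\<mu> t x + d\<phi> t x - lap \<Omega> (\<mu> t) x = P (\<phi> t x) * (\<sigma> t x - \<mu> t x) \<and>
        \<mu> t x = \<beta> * d\<phi> t x - lap \<Omega> (\<phi> t) x + Fprime Bh pih (\<phi> t x) \<and>
        d\<sigma> t x - lap \<Omega> (\<sigma> t) x = - P (\<phi> t x) * (\<sigma> t x - \<mu> t x) + u t x) \<and>
     \<comment> \<open>initial conditions\<close>
     (AE x in lebesgue_on \<Omega>. \<mu> 0 x = \<mu>0 x \<and> \<phi> 0 x = \<phi>0 x \<and> \<sigma> 0 x = \<sigma>0 x)"

text \<open>The cost functional J(phi, sigma, u, tau); b k is the constant b_k (k = 0..6).\<close>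
definition cost :: "'a::euclidean_space set \<Rightarrow> real \<Rightarrow> (nat \<Rightarrow> real) \<Rightarrow> (real \<Rightarrow> 'a \<Rightarrow> real)
   \<Rightarrow> (real \<Rightarrow> 'a \<Rightarrow> real) \<Rightarrow> ('a \<Rightarrow> real) \<Rightarrow> real
   \<Rightarrow> (real \<Rightarrow> 'a \<Rightarrow> real) \<Rightarrow> (real \<Rightarrow> 'a \<Rightarrow> real) \<Rightarrow> (real \<Rightarrow> 'a \<Rightarrow> real) \<Rightarrow> real \<Rightarrow> real" where
  "cost \<Omega> T b \<phi>Q \<sigma>Q \<phi>\<Omega> \<tau>s \<phi> \<sigma> u \<tau> =
     b 1 / 2 * (\<integral>p. (\<lambda>(x,t). (\<phi> t x - \<phi>Q t x)\<^sup>2) p \<partial>lebesgue_on (\<Omega> \<times> {0<..<\<tau>}))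
   + b 2 / 2 * (\<integral>x. (\<phi> \<tau> x - \<phi>\<Omega> x)\<^sup>2 \<partial>lebesgue_on \<Omega>)
   + b 3 / 2 * (\<integral>p. (\<lambda>(x,t). (\<sigma> t x - \<sigma>Q t x)\<^sup>2) p \<partial>lebesgue_on (\<Omega> \<times> {0<..<\<tau>}))
   + b 4 / 2 * (\<integral>x. 1 + \<phi> \<tau> x \<partial>lebesgue_on \<Omega>)
   + b 5 * \<tau>
   + b 6 / 2 * (\<tau> - \<tau>s)\<^sup>2
   + b 0 / 2 * (\<integral>p. (\<lambda>(x,t). (u t x)\<^sup>2) p \<partial>lebesgue_on (\<Omega> \<times> {0<..<T}))"

end

theory Submission
  imports Defs
begin
primrec Cr :: "nat \<Rightarrow> (real \<Rightarrow> real) \<Rightarrow> bool" where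
  "Cr 0 f = continuous_on UNIV f"
| "Cr (Suc k) f = ((\<forall>x. f differentiable (at x)) \<and> Cr k (deriv f))"

lemma frechet_real_1:
  fixes f :: "real \<Rightarrow> real"
  assumes "f differentiable (at x)"
  shows "frechet_derivative f (at x) 1 = deriv f x"
proof -
  have d: "(f has_real_derivative deriv f x) (at x)"
    using assms DERIV_deriv_iff_real_differentiable by blast
  then have "(f has_vector_derivative deriv f x) (at x)"
    using has_real_derivative_iff_has_vector_derivative by blast
  then have "vector_derivative f (at x) = deriv f x"
    by (simp add: vector_derivative_at)
  then show ?thesis using frechet_derivative_eq_vector_derivative[OF assms] by simp
qed

lemma Ck_on_Cr: "Ck_on k UNIV f = Cr k f"
proof (induction k arbitrary: f)
  case 0
  then show ?case by simp
next
  case (Suc k)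
  show ?case
  proof (cases "\<forall>x. f differentiable (at x)")
    case True
    then have "(\<lambda>x. frechet_derivative f (at x) 1) = deriv f"
      using frechet_real_1 by auto
    then show ?thesis using True Suc by (simp add: Basis_real_def)
  next
    case False
    then show ?thesis by auto
  qed
qed

lemma Cr_SucI:
  assumes "\<And>x. (f has_real_derivative f' x) (at x)" "Cr k f'"
  shows "Cr (Suc k) f"
proof -
  have "deriv f = f'" using assms(1) DERIV_imp_deriv by blast
  moreover have "\<forall>x. f differentiable (at x)"
    using assms(1) real_differentiable_def by blast
  ultimately show ?thesis using assms(2) by simp
qed

lemma Cr_SucD:
  assumes "Cr (Suc k) f"
  shows "\<And>x. (f has_real_derivative deriv f x) (at x)" "Cr k (deriv f)"
  using assms DERIV_deriv_iff_real_differentiable by auto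

lemma Cr_cont: "Cr k f \<Longrightarrow> continuous_on UNIV f"
proof (cases k)
  case 0
  then show "Cr k f \<Longrightarrow> ?thesis" by simp
next
  case (Suc m)
  assume "Cr k f"
  then have "\<forall>x. f differentiable (at x)" using Suc by simp
  then show ?thesis
    by (simp add: continuous_at_imp_continuous_on differentiable_imp_continuous_within)
qed

lemma Cr_mono: "Cr (Suc k) f \<Longrightarrow> Cr k f"
proof (induction k arbitrary: f)
  case 0
  then show ?case using Cr_cont[of "Suc 0" f] by simp
next
  case (Suc k)
  then show ?case by simp
qed

lemma Cr_const: "Cr k (\<lambda>x. c)"
proof (induction k arbitrary: c)
  case 0
  then show ?case by simp
next
  case (Suc k)
  show ?case by (rule Cr_SucI[where f'="\<lambda>x. 0"]) (auto intro: Suc)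
qed

lemma Cr_affine: "Cr k (\<lambda>x. a * x + b)"
proof (cases k)
  case 0
  then show ?thesis by (simp add: continuous_on_add continuous_on_mult)
next
  case (Suc m)
  show ?thesis unfolding Suc
    by (rule Cr_SucI[where f'="\<lambda>x. a"]) (auto intro!: derivative_eq_intros Cr_const)
qed

lemma Cr_add: "Cr k f \<Longrightarrow> Cr k g \<Longrightarrow> Cr k (\<lambda>x. f x + g x)"
proof (induction k arbitrary: f g)
  case 0
  then show ?case by (simp add: continuous_on_add)
next
  case (Suc k)
  show ?case
    apply (rule Cr_SucI[where f'="\<lambda>x. deriv f x + deriv g x"])
    using Suc Cr_SucD by (auto intro!: derivative_eq_intros)
qed

lemma Cr_mult: "Cr k f \<Longrightarrow> Cr k g \<Longrightarrow> Cr k (\<lambda>x. f x * g x)"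
proof (induction k arbitrary: f g)
  case 0
  then show ?case by (simp add: continuous_on_mult)
next
  case (Suc k)
  have "Cr k (\<lambda>x. deriv f x * g x)" using Suc Cr_mono Cr_SucD by blast
  moreover have "Cr k (\<lambda>x. f x * deriv g x)" using Suc Cr_mono Cr_SucD by blast
  ultimately have "Cr k (\<lambda>x. deriv f x * g x + f x * deriv g x)" using Cr_add by blast
  then show ?case
    apply (rule Cr_SucI[rotated])
    using Suc.prems Cr_SucD by (auto intro!: derivative_eq_intros)
qed

lemma Cr_compose: "Cr k f \<Longrightarrow> Cr k g \<Longrightarrow> Cr k (\<lambda>x. f (g x))"
proof (induction k arbitrary: f g)
  case 0
  then show ?case by (auto intro: continuous_on_compose2)
next
  case (Suc k)
  have "Cr k (\<lambda>x. deriv f (g x))" using Suc Cr_mono Cr_SucD by blast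
  then have "Cr k (\<lambda>x. deriv f (g x) * deriv g x)" using Cr_mult Suc Cr_SucD by blast
  then show ?case
    apply (rule Cr_SucI[rotated])
    using Suc.prems Cr_SucD DERIV_chain2 by blast
qed

lemma Cr_inverse: "Cr k g \<Longrightarrow> (\<And>x. g x \<noteq> 0) \<Longrightarrow> Cr k (\<lambda>x. 1 / g x)"
proof (induction k arbitrary: g)
  case 0
  have "continuous_on UNIV g" using 0 by simp
  then show ?case using 0(2) by (simp add: continuous_on_divide)
next
  case (Suc k)
  have inv: "Cr k (\<lambda>x. 1 / g x)" using Suc.IH[OF Cr_mono[OF Suc.prems(1)] Suc.prems(2)] .
  have c: "Cr k (\<lambda>x. (-1) * (deriv g x * ((1 / g x) * (1 / g x))))"
    by (intro Cr_mult[OF Cr_const] Cr_mult[OF Cr_SucD(2)[OF Suc.prems(1)]] Cr_mult[OF inv inv])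
  have der: "((\<lambda>x. 1 / g x) has_real_derivative (-1) * (deriv g x * ((1 / g x) * (1 / g x)))) (at x)" for x
  proof -
    have "((\<lambda>x. inverse (g x)) has_real_derivative - (deriv g x * (inverse (g x) * inverse (g x)))) (at x)"
      using DERIV_inverse_fun[OF Cr_SucD(1)[OF Suc.prems(1)] Suc.prems(2)] by simp
    then show ?thesis by (simp add: inverse_eq_divide)
  qed
  show ?case by (rule Cr_SucI[OF der c])
qed

definition tm :: "real \<Rightarrow> nat \<Rightarrow> real \<Rightarrow> real" where
  "tm c k = (\<lambda>t. if 0 < t then c * (1/t)^k * exp (-1/t) else 0)"

lemma tm_deriv_pos:
  assumes "0 < x"
  shows "(tm c k has_real_derivative (tm (- c * k) (Suc k) x + tm c (Suc (Suc k)) x)) (at x)"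
proof -
  have d1: "((\<lambda>t. (1/t)^k) has_real_derivative (- real k * (1/x)^(Suc k))) (at x)"
  proof (cases k)
    case 0
    then show ?thesis by simp
  next
    case (Suc m)
    have inv: "((\<lambda>t. 1/t) has_real_derivative (- (1 / x\<^sup>2))) (at x)"
      using assms by (auto intro!: derivative_eq_intros simp: power2_eq_square)
    have "((\<lambda>t. (1/t)^k) has_real_derivative (real k * ((- (1 / x\<^sup>2)) * (1/x)^(k - Suc 0)))) (at x)"
      by (rule DERIV_power[OF inv])
    moreover have "real k * ((- (1 / x\<^sup>2)) * (1/x)^(k - Suc 0)) = - real k * (1/x)^(Suc k)"
      using assms unfolding Suc by (simp add: power2_eq_square power_one_over field_simps)
    ultimately show ?thesis by simp
  qed
  have d2: "((\<lambda>t. exp (-1/t)) has_real_derivative (exp (-1/x) * (1/x)^2)) (at x)"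
    using assms by (auto intro!: derivative_eq_intros simp: power2_eq_square)
  note d3' = DERIV_cmult[OF DERIV_mult[OF d1 d2], of c]
  have d3: "((\<lambda>t. c * ((1/t)^k * exp (-1/t))) has_real_derivative
     c * ((- real k * (1/x)^(Suc k)) * exp (-1/x) + (1/x)^k * (exp (-1/x) * (1/x)^2))) (at x)"
    using d3' by (simp add: ac_simps)
  have e: "c * ((- real k * (1/x)^(Suc k)) * exp (-1/x) + (1/x)^k * (exp (-1/x) * (1/x)^2))
      = tm (- c * k) (Suc k) x + tm c (Suc (Suc k)) x"
    using assms by (simp add: tm_def algebra_simps power2_eq_square)
  have "(tm c k has_real_derivative
        c * ((- real k * (1/x)^(Suc k)) * exp (-1/x) + (1/x)^k * (exp (-1/x) * (1/x)^2))) (at x)"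
    by (rule has_field_derivative_transform_within_open[OF d3, where S="{0<..}"]) (use assms in \<open>auto simp: tm_def\<close>)
  then show ?thesis using e by simp
qed

lemma tm_deriv_neg:
  assumes "x < 0"
  shows "(tm c k has_real_derivative (tm (- c * k) (Suc k) x + tm c (Suc (Suc k)) x)) (at x)"
proof -
  have "((\<lambda>t. 0) has_real_derivative 0) (at x)" by simp
  then have "(tm c k has_real_derivative 0) (at x)"
    by (rule has_field_derivative_transform_within_open[where S="{..<0}"]) (use assms in \<open>auto simp: tm_def\<close>)
  then show ?thesis using assms by (simp add: tm_def)
qed

lemma tm_deriv_0:
  "(tm c k has_real_derivative (tm (- c * k) (Suc k) 0 + tm c (Suc (Suc k)) 0)) (at 0)"
proof -
  have lim1: "((\<lambda>z. c * (z^(Suc k) / exp z)) \<longlongrightarrow> 0) at_top"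
    by (intro tendsto_mult_right_zero tendsto_power_div_exp_0)
  have lim2: "((\<lambda>y. c * ((inverse y)^(Suc k) / exp (inverse y))) \<longlongrightarrow> 0) (at_right 0)"
    using filterlim_compose[OF lim1 filterlim_inverse_at_top_right] by (simp add: o_def)
  have ev: "\<forall>\<^sub>F y in at_right 0. c * ((inverse y)^(Suc k) / exp (inverse y)) = (tm c k y - tm c k 0) / (y - 0)"
    unfolding eventually_at_right_field
  proof (intro exI[of _ 1] conjI allI impI)
    fix y :: real assume "0 < y"
    then show "c * (inverse y ^ Suc k / exp (inverse y)) = (tm c k y - tm c k 0) / (y - 0)"
      by (simp add: tm_def exp_minus field_simps)
  qed simp
  have r: "((\<lambda>y. (tm c k y - tm c k 0) / (y - 0)) \<longlongrightarrow> 0) (at_right 0)"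
    using Lim_transform_eventually[OF lim2 ev] .
  have ev2: "\<forall>\<^sub>F y in at_left 0. (0::real) = (tm c k y - tm c k 0) / (y - 0)"
    unfolding eventually_at_left_field
    by (intro exI[of _ "-1"]) (auto simp: tm_def)
  have l: "((\<lambda>y. (tm c k y - tm c k 0) / (y - 0)) \<longlongrightarrow> 0) (at_left 0)"
    using Lim_transform_eventually[OF tendsto_const ev2] .
  have "(tm c k has_real_derivative 0) (at 0)"
    unfolding has_field_derivative_iff using filterlim_at_split r l by blast
  then show ?thesis by (simp add: tm_def)
qed

lemma tm_deriv: "(tm c k has_real_derivative (tm (- c * k) (Suc k) x + tm c (Suc (Suc k)) x)) (at x)"
  using tm_deriv_pos tm_deriv_neg tm_deriv_0 by (cases "x < 0"; cases "x > 0") auto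

inductive FE :: "(real \<Rightarrow> real) \<Rightarrow> bool" where
  FE_tm: "FE (tm c k)"
| FE_add: "FE f \<Longrightarrow> FE g \<Longrightarrow> FE (\<lambda>t. f t + g t)"

lemma FE_deriv: "FE f \<Longrightarrow> \<exists>f'. FE f' \<and> (\<forall>x. (f has_real_derivative f' x) (at x))"
proof (induction rule: FE.induct)
  case (FE_tm c k)
  show ?case
    by (rule exI[of _ "\<lambda>x. tm (- c * k) (Suc k) x + tm c (Suc (Suc k)) x"])
       (blast intro: FE.intros tm_deriv)
next
  case (FE_add f g)
  then obtain f' g' where "FE f'" "FE g'" "\<forall>x. (f has_real_derivative f' x) (at x)"
    "\<forall>x. (g has_real_derivative g' x) (at x)" by blast
  then show ?case
    by (intro exI[of _ "\<lambda>x. f' x + g' x"]) (auto intro: FE.intros DERIV_add)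
qed

lemma FE_Cr: "FE f \<Longrightarrow> Cr k f"
proof (induction k arbitrary: f)
  case 0
  obtain f' where "\<forall>x. (f has_real_derivative f' x) (at x)" using FE_deriv[OF 0] by blast
  then show ?case
    by (auto intro!: continuous_at_imp_continuous_on DERIV_continuous)
next
  case (Suc k)
  obtain f' where "FE f'" "\<forall>x. (f has_real_derivative f' x) (at x)" using FE_deriv[OF Suc.prems] by blast
  then show ?case using Cr_SucI Suc.IH by blast
qed

definition EE :: "real \<Rightarrow> real" where "EE = tm 1 0"

lemma EE_Cr: "Cr k EE" unfolding EE_def by (rule FE_Cr) (rule FE_tm)

lemma EE_simp: "EE t = (if 0 < t then exp (-1/t) else 0)"
  by (simp add: EE_def tm_def)

lemma EE_nonneg: "0 \<le> EE t" by (simp add: EE_simp)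

lemma EE_mono: "a \<le> b \<Longrightarrow> EE a \<le> EE b"
  by (auto simp: EE_simp frac_le divide_le_cancel)

definition step :: "real \<Rightarrow> real" where
  "step t = EE t * (1 / (EE t + EE (-1 * t + 1)))"

lemma step_den_pos: "0 < EE t + EE (-1 * t + 1)"
  by (cases "0 < t") (auto simp: EE_simp add_pos_nonneg add_nonneg_pos)

lemma step_Cr: "Cr k step"
proof -
  have "Cr k (\<lambda>t. EE t + EE (-1 * t + 1))"
    by (intro Cr_add EE_Cr Cr_compose[OF EE_Cr Cr_affine])
  then have "Cr k (\<lambda>t. 1 / (EE t + EE (-1 * t + 1)))"
  proof (rule Cr_inverse)
    fix t show "EE t + EE (-1 * t + 1) \<noteq> 0" using step_den_pos[of t] by linarith
  qed
  then show ?thesis unfolding step_def[abs_def] by (intro Cr_mult EE_Cr)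
qed

lemma step_0: "t \<le> 0 \<Longrightarrow> step t = 0" by (simp add: step_def EE_simp)
lemma step_1: "1 \<le> t \<Longrightarrow> step t = 1"
  using step_den_pos[of t] by (simp add: step_def EE_simp)

lemma step_mono: "a \<le> b \<Longrightarrow> step a \<le> step b"
proof -
  assume ab: "a \<le> b"
  let ?A = "EE a" and ?B = "EE b" and ?A' = "EE (-1 * a + 1)" and ?B' = "EE (-1 * b + 1)"
  have h1: "?A \<le> ?B" using EE_mono ab by blast
  have h2: "?B' \<le> ?A'" using EE_mono ab by simp
  have "?A * ?B' \<le> ?B * ?A'" using h1 h2 EE_nonneg by (intro mult_mono) auto
  then have "?A * (?B + ?B') \<le> ?B * (?A + ?A')" by (simp add: algebra_simps)
  then show ?thesis using step_den_pos[of a] step_den_pos[of b]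
    by (simp add: step_def field_simps)
qed

lemma step_deriv: "(step has_real_derivative deriv step x) (at x)"
  using Cr_SucD(1)[OF step_Cr[of "Suc 0"]] .

lemma step_deriv_nonneg: "0 \<le> deriv step x"
proof -
  have "mono_on UNIV step" by (auto intro: mono_onI step_mono)
  from mono_on_imp_deriv_nonneg[OF this step_deriv] show ?thesis by simp
qed

lemma step_deriv_out: "x < 0 \<or> 1 < x \<Longrightarrow> deriv step x = 0"
proof -
  assume x: "x < 0 \<or> 1 < x"
  show ?thesis
  proof (cases "x < 0")
    case True
    have "(step has_real_derivative 0) (at x)"
      by (rule has_field_derivative_transform_within_open[OF DERIV_const[of 0 "at x"], where S="{..<0}"])
         (use True in \<open>auto simp: step_0\<close>)
    then show ?thesis using DERIV_unique step_deriv by blast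
  next
    case False
    then have "1 < x" using x by simp
    have "(step has_real_derivative 0) (at x)"
      by (rule has_field_derivative_transform_within_open[OF DERIV_const[of 1 "at x"], where S="{1<..}"])
         (use \<open>1 < x\<close> in \<open>auto simp: step_1\<close>)
    then show ?thesis using DERIV_unique step_deriv by blast
  qed
qed

lemma step_smooth: "smooth step"
  unfolding smooth_def using step_Cr Ck_on_Cr by blast

lemma deriv_step_cont: "continuous_on UNIV (deriv step)"
  using Cr_SucD(2)[OF step_Cr[of "Suc 0"]] by simp

lemma lebesgue_interval_integral:
  fixes f :: "real \<Rightarrow> real"
  assumes "continuous_on {a..b} f"
  shows "integrable (lebesgue_on {a<..<b}) f"
    and "integral\<^sup>L (lebesgue_on {a<..<b}) f = integral {a..b} f"
proof -
  have ai: "f absolutely_integrable_on {a..b}"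
    using absolutely_integrable_continuous_real[OF assms] .
  have ai2: "f absolutely_integrable_on {a<..<b}"
    by (rule set_integrable_subset[OF ai]) auto
  show i: "integrable (lebesgue_on {a<..<b}) f"
    using ai2 by (simp add: set_integrable_def integrable_restrict_space)
  have "integral\<^sup>L (lebesgue_on {a<..<b}) f = integral {a<..<b} f"
    by (rule lebesgue_integral_eq_integral[OF i]) simp
  also have "\<dots> = integral {a..b} f"
    using integral_open_interval[of a b f] by (simp add: box_real)
  finally show "integral\<^sup>L (lebesgue_on {a<..<b}) f = integral {a..b} f" .
qed

lemma test_fun_props:
  assumes "test_fun {0<..<T} \<zeta>"
  shows "\<And>t. t \<notin> {0<..<T} \<Longrightarrow> \<zeta> t = 0"
    and "\<And>x. (\<zeta> has_real_derivative deriv \<zeta> x) (at x)"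
    and "continuous_on UNIV (deriv \<zeta>)"
    and "continuous_on UNIV \<zeta>"
proof -
  have sm: "\<And>k. Cr k \<zeta>" using assms unfolding test_fun_def smooth_def Ck_on_Cr by blast
  show "\<zeta> t = 0" if t: "t \<notin> {0<..<T}" for t
  proof -
    have "closure {x. \<zeta> x \<noteq> 0} \<subseteq> {0<..<T}" using assms unfolding test_fun_def by blast
    then have "t \<notin> closure {x. \<zeta> x \<noteq> 0}" using t by blast
    then show ?thesis by (meson closure_subset mem_Collect_eq subsetD)
  qed
  show "\<And>x. (\<zeta> has_real_derivative deriv \<zeta> x) (at x)"
    using Cr_SucD(1)[OF sm[of "Suc 0"]] .
  show "continuous_on UNIV (deriv \<zeta>)"
    using Cr_SucD(2)[OF sm[of "Suc (Suc 0)"]] Cr_cont by blast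
  show "continuous_on UNIV \<zeta>" using sm[of 0] by simp
qed

lemma const_lemma:
  fixes G :: "real \<Rightarrow> real"
  assumes T: "0 < T" and cG: "continuous_on {0..T} G"
    and weakG: "\<And>\<zeta>. test_fun {0<..<T} \<zeta> \<Longrightarrow> integral {0..T} (\<lambda>t. G t * deriv \<zeta> t) = 0"
    and c: "0 < c" and cd: "c < d" and d: "d < T"
  shows "G c = G d"
proof (rule ccontr)
  assume ne: "G c \<noteq> G d"
  define \<eta> where "\<eta> = \<bar>G c - G d\<bar> / 4"
  have \<eta>: "0 < \<eta>" using ne by (simp add: \<eta>_def)
  have "c \<in> {0..T}" using c cd d by auto
  then obtain \<delta>1 where \<delta>1: "\<delta>1 > 0" "\<forall>t\<in>{0..T}. dist t c < \<delta>1 \<longrightarrow> dist (G t) (G c) < \<eta>"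
    using cG \<eta> unfolding continuous_on_iff by blast
  have "d \<in> {0..T}" using c cd d by auto
  then obtain \<delta>2 where \<delta>2: "\<delta>2 > 0" "\<forall>t\<in>{0..T}. dist t d < \<delta>2 \<longrightarrow> dist (G t) (G d) < \<eta>"
    using cG \<eta> unfolding continuous_on_iff by blast
  define m where "m = min (min \<delta>1 \<delta>2) (T - d)"
  have m: "0 < m" "m \<le> \<delta>1" "m \<le> \<delta>2" "m \<le> T - d"
    unfolding m_def using \<delta>1(1) \<delta>2(1) d by auto
  define \<epsilon> where "\<epsilon> = m / 2"
  have \<epsilon>: "0 < \<epsilon>" "\<epsilon> < \<delta>1" "\<epsilon> < \<delta>2" "d + \<epsilon> < T"
    unfolding \<epsilon>_def using m by linarith+
  define w where "w a t = deriv step ((t - a) / \<epsilon>) * (1 / \<epsilon>)" for a t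
  define R where "R a t = step ((t - a) / \<epsilon>)" for a t
  have Rd: "(R a has_real_derivative w a t) (at t)" for a t
  proof -
    have "((\<lambda>t. (t - a) / \<epsilon>) has_real_derivative 1 / \<epsilon>) (at t)"
      using \<epsilon>(1) by (auto intro!: derivative_eq_intros)
    from DERIV_chain2[OF step_deriv this] show ?thesis
      unfolding R_def w_def using \<epsilon>(1) by simp
  qed
  have w_nonneg: "0 \<le> w a t" for a t
    using step_deriv_nonneg \<epsilon> by (simp add: w_def)
  have w_supp: "w a t \<noteq> 0 \<Longrightarrow> a \<le> t \<and> t \<le> a + \<epsilon>" for a t
  proof -
    assume "w a t \<noteq> 0"
    then have "deriv step ((t - a) / \<epsilon>) \<noteq> 0" by (simp add: w_def)
    then have "0 \<le> (t - a) / \<epsilon> \<and> (t - a) / \<epsilon> \<le> 1" by (metis not_less step_deriv_out)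
    then show ?thesis using \<epsilon> by (simp add: field_simps)
  qed
  have w_cont: "continuous_on {0..T} (w a)" for a
  proof -
    have "continuous_on UNIV (\<lambda>t. deriv step ((t - a) / \<epsilon>) * (1 / \<epsilon>))"
      by (intro continuous_on_mult continuous_on_const continuous_on_compose2[OF deriv_step_cont])
         (use \<epsilon>(1) in \<open>auto intro!: continuous_intros\<close>)
    then show ?thesis unfolding w_def[abs_def] by (rule continuous_on_subset) auto
  qed
  have w_int: "integral {0..T} (w a) = 1" if "0 < a" "a + \<epsilon> < T" for a
  proof -
    have "(w a has_integral (R a T - R a 0)) {0..T}"
      apply (rule fundamental_theorem_of_calculus)
      using T apply simp
      apply (rule has_vector_derivative_at_within)
      using Rd has_real_derivative_iff_has_vector_derivative by blast
    moreover have "R a T = 1" unfolding R_def using that \<epsilon> by (intro step_1) (simp add: field_simps)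
    moreover have "R a 0 = 0" unfolding R_def using that \<epsilon> by (intro step_0) (simp add: field_simps)
    ultimately show ?thesis by (simp add: integral_unique)
  qed
  have approx: "\<bar>integral {0..T} (\<lambda>t. G t * w a t) - G a\<bar> \<le> \<eta>"
    if a: "0 < a" "a + \<epsilon> < T" and close: "\<And>t. t \<in> {0..T} \<Longrightarrow> dist t a < \<epsilon> + (\<delta> - \<epsilon>) \<Longrightarrow> dist (G t) (G a) < \<eta>"
      and \<delta>: "\<epsilon> < \<delta>" for a \<delta>
  proof -
    have iG: "(\<lambda>t. G t * w a t) integrable_on {0..T}"
      by (intro integrable_continuous_real continuous_on_mult cG w_cont)
    have iw: "w a integrable_on {0..T}" by (intro integrable_continuous_real w_cont)
    have iGa: "(\<lambda>t. G a * w a t) integrable_on {0..T}"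
      by (intro integrable_continuous_real continuous_on_mult continuous_on_const w_cont)
    have "integral {0..T} (\<lambda>t. G a * w a t) = G a" using w_int[OF a] by simp
    then have "integral {0..T} (\<lambda>t. G t * w a t) - G a = integral {0..T} (\<lambda>t. G t * w a t) - integral {0..T} (\<lambda>t. G a * w a t)"
      by simp
    also have "\<dots> = integral {0..T} (\<lambda>t. G t * w a t - G a * w a t)"
      by (rule integral_diff[OF iG iGa, symmetric])
    also have "\<dots> = integral {0..T} (\<lambda>t. (G t - G a) * w a t)"
      by (simp add: left_diff_distrib)
    finally have eq: "integral {0..T} (\<lambda>t. G t * w a t) - G a = integral {0..T} (\<lambda>t. (G t - G a) * w a t)" .
    have "norm (integral {0..T} (\<lambda>t. (G t - G a) * w a t)) \<le> integral {0..T} (\<lambda>t. \<eta> * w a t)"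
    proof (rule integral_norm_bound_integral)
      show "(\<lambda>t. (G t - G a) * w a t) integrable_on {0..T}"
        by (intro integrable_continuous_real continuous_on_mult continuous_on_diff cG w_cont continuous_on_const)
      show "(\<lambda>t. \<eta> * w a t) integrable_on {0..T}"
        by (intro integrable_continuous_real continuous_on_mult w_cont continuous_on_const)
      fix t assume t: "t \<in> {0..T}"
      show "norm ((G t - G a) * w a t) \<le> \<eta> * w a t"
      proof (cases "w a t = 0")
        case True then show ?thesis by simp
      next
        case False
        then have "dist t a < \<delta>" using w_supp[OF False] \<delta> \<epsilon> by (auto simp: dist_real_def)
        then have "\<bar>G t - G a\<bar> < \<eta>" using close[OF t] by (simp add: dist_real_def)
        then show ?thesis using w_nonneg[of a t]
          by (simp add: abs_mult mult_right_mono)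
      qed
    qed
    also have "\<dots> = \<eta>" using w_int[OF a] by simp
    finally show ?thesis using eq by simp
  qed
  have ac: "\<bar>integral {0..T} (\<lambda>t. G t * w c t) - G c\<bar> \<le> \<eta>"
    by (rule approx[of c \<delta>1]) (use c cd \<epsilon> \<delta>1 in auto)
  have ad: "\<bar>integral {0..T} (\<lambda>t. G t * w d t) - G d\<bar> \<le> \<eta>"
    by (rule approx[of d \<delta>2]) (use c cd \<epsilon> \<delta>2 d in auto)
  define \<zeta> where "\<zeta> t = R c t - R d t" for t
  have \<zeta>d: "(\<zeta> has_real_derivative (w c t - w d t)) (at t)" for t
    unfolding \<zeta>_def by (intro DERIV_diff Rd)
  have d\<zeta>: "deriv \<zeta> t = w c t - w d t" for t using DERIV_imp_deriv[OF \<zeta>d] .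
  have test: "test_fun {0<..<T} \<zeta>"
  proof -
    have eqf: "\<zeta> = (\<lambda>t. step ((1/\<epsilon>) * t + (- c / \<epsilon>)) + (-1) * step ((1/\<epsilon>) * t + (- d / \<epsilon>)))"
      using \<epsilon>(1) by (intro ext) (simp add: \<zeta>_def R_def diff_divide_distrib)
    have "Cr k \<zeta>" for k
      unfolding eqf by (rule Cr_add[OF Cr_compose[OF step_Cr Cr_affine] Cr_mult[OF Cr_const Cr_compose[OF step_Cr Cr_affine]]])
    then have sm: "smooth \<zeta>" unfolding smooth_def Ck_on_Cr by blast
    have sub: "{x. \<zeta> x \<noteq> 0} \<subseteq> {c..d + \<epsilon>}"
    proof
      fix x assume "x \<in> {x. \<zeta> x \<noteq> 0}"
      then have nz: "\<zeta> x \<noteq> 0" by simp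
      show "x \<in> {c..d + \<epsilon>}"
      proof (rule ccontr)
        assume "x \<notin> {c..d + \<epsilon>}"
        then have "x < c \<or> d + \<epsilon> < x" by auto
        then show False
        proof
          assume "x < c"
          then have "(x - c) / \<epsilon> \<le> 0" "(x - d) / \<epsilon> \<le> 0" using \<epsilon>(1) cd
            by (simp_all add: divide_le_0_iff)
          then have "R c x = 0" "R d x = 0" unfolding R_def by (simp_all add: step_0)
          then show False using nz by (simp add: \<zeta>_def)
        next
          assume "d + \<epsilon> < x"
          then have "1 \<le> (x - c) / \<epsilon>" "1 \<le> (x - d) / \<epsilon>" using \<epsilon>(1) cd
            by (simp_all add: le_divide_eq)
          then have "R c x = 1" "R d x = 1" unfolding R_def by (simp_all add: step_1)
          then show False using nz by (simp add: \<zeta>_def)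
        qed
      qed
    qed
    have cl: "closure {x. \<zeta> x \<noteq> 0} \<subseteq> {c..d + \<epsilon>}"
      by (rule closure_minimal[OF sub]) simp
    have "compact (closure {x. \<zeta> x \<noteq> 0})"
      using compact_closure bounded_subset[OF bounded_closed_interval sub] by blast
    moreover have "{c..d + \<epsilon>} \<subseteq> {0<..<T}" using c \<epsilon>(4) by auto
    then have "closure {x. \<zeta> x \<noteq> 0} \<subseteq> {0<..<T}" using cl by blast
    ultimately show ?thesis using sm unfolding test_fun_def by blast
  qed
  have "0 = integral {0..T} (\<lambda>t. G t * deriv \<zeta> t)" using weakG[OF test] by simp
  also have "\<dots> = integral {0..T} (\<lambda>t. G t * w c t) - integral {0..T} (\<lambda>t. G t * w d t)"
  proof -
    have i1: "(\<lambda>t. G t * w c t) integrable_on {0..T}"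
      by (intro integrable_continuous_real continuous_on_mult cG w_cont)
    have i2: "(\<lambda>t. G t * w d t) integrable_on {0..T}"
      by (intro integrable_continuous_real continuous_on_mult cG w_cont)
    have "(\<lambda>t. G t * deriv \<zeta> t) = (\<lambda>t. G t * w c t - G t * w d t)"
      by (simp add: d\<zeta> right_diff_distrib)
    then show ?thesis using integral_diff[OF i1 i2] by simp
  qed
  finally have "integral {0..T} (\<lambda>t. G t * w c t) = integral {0..T} (\<lambda>t. G t * w d t)" by simp
  then have "\<bar>G c - G d\<bar> \<le> 2 * \<eta>" using ac ad by linarith
  then show False using \<eta> by (simp add: \<eta>_def)
qed

lemma endpoint_const:
  fixes G :: "real \<Rightarrow> real"
  assumes T: "0 < T" and cG: "continuous_on {0..T} G"
    and cst: "\<And>c d. 0 < c \<Longrightarrow> c < d \<Longrightarrow> d < T \<Longrightarrow> G c = G d"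
    and x: "x \<in> {0..T}"
  shows "G x = G (T/2)"
proof -
  have inner: "G y = G (T/2)" if "0 < y" "y < T" for y
  proof -
    consider "y < T/2" | "y = T/2" | "T/2 < y" by linarith
    then show ?thesis
    proof cases
      case 1 then show ?thesis using cst[of y "T/2"] that by simp
    next
      case 2 then show ?thesis by (rule arg_cong)
    next
      case 3 then show ?thesis using cst[of "T/2" y] that T by simp
    qed
  qed
  show ?thesis
  proof (rule ccontr)
    assume ne: "G x \<noteq> G (T/2)"
    define e where "e = \<bar>G x - G (T/2)\<bar>"
    have e: "0 < e" using ne by (simp add: e_def)
    obtain \<delta> where \<delta>: "\<delta> > 0" "\<forall>y\<in>{0..T}. dist y x < \<delta> \<longrightarrow> dist (G y) (G x) < e"
      using cG e x unfolding continuous_on_iff by blast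
    define m where "m = min (\<delta>/2) (T/4)"
    have m: "0 < m" "m < \<delta>" "m \<le> T/4" using \<delta>(1) T by (auto simp: m_def)
    define y where "y = (if x \<le> T/2 then x + m else x - m)"
    have y: "0 < y" "y < T" "dist y x < \<delta>"
      using m x T by (auto simp: y_def dist_real_def)
    have "dist (G y) (G x) < e" using \<delta>(2) y by auto
    moreover have "G y = G (T/2)" using inner y by blast
    ultimately show False by (simp add: e_def dist_real_def abs_minus_commute)
  qed
qed

lemma weak_deriv_HK:
  fixes g h :: "real \<Rightarrow> real"
  assumes T: "0 < T" and cg: "continuous_on {0..T} g" and ch: "continuous_on {0..T} h"
    and weak: "\<And>\<zeta>. test_fun {0<..<T} \<zeta> \<Longrightarrow>
        integral {0..T} (\<lambda>t. g t * deriv \<zeta> t) = - integral {0..T} (\<lambda>t. h t * \<zeta> t)"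
    and t: "t \<in> {0..T}"
  shows "(g has_real_derivative h t) (at t within {0..T})"
proof -
  define H where "H x = integral {0..x} h" for x
  have HD: "(H has_real_derivative h x) (at x within {0..T})" if "x \<in> {0..T}" for x
    unfolding H_def[abs_def] by (rule integral_has_real_derivative[OF ch that])
  have cH: "continuous_on {0..T} H"
    using HD DERIV_continuous continuous_on_eq_continuous_within by blast
  define G where "G x = g x - H x" for x
  have cG: "continuous_on {0..T} G"
    unfolding G_def[abs_def] by (intro continuous_on_diff cg cH)
  have weakG: "integral {0..T} (\<lambda>t. G t * deriv \<zeta> t) = 0" if z: "test_fun {0<..<T} \<zeta>" for \<zeta>
  proof -
    note zp = test_fun_props[OF z]
    have cz: "continuous_on {0..T} \<zeta>" using zp(4) continuous_on_subset by blast
    have cdz: "continuous_on {0..T} (deriv \<zeta>)" using zp(3) continuous_on_subset by blast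
    have z0: "\<zeta> 0 = 0" "\<zeta> T = 0" using zp(1) by auto
    have "((\<lambda>x. h x * \<zeta> x + H x * deriv \<zeta> x) has_integral (H T * \<zeta> T - H 0 * \<zeta> 0)) {0..T}"
    proof (rule fundamental_theorem_of_calculus)
      show "0 \<le> T" using T by simp
      fix x assume x: "x \<in> {0..T}"
      have "((\<lambda>x. H x * \<zeta> x) has_real_derivative h x * \<zeta> x + H x * deriv \<zeta> x) (at x within {0..T})"
        using DERIV_mult[OF HD[OF x] has_field_derivative_at_within[OF zp(2)]] by (simp add: ac_simps)
      then show "((\<lambda>x. H x * \<zeta> x) has_vector_derivative h x * \<zeta> x + H x * deriv \<zeta> x) (at x within {0..T})"
        using has_real_derivative_iff_has_vector_derivative by blast
    qed
    then have "integral {0..T} (\<lambda>x. h x * \<zeta> x + H x * deriv \<zeta> x) = 0"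
      using z0 by (simp add: integral_unique)
    moreover have i1: "(\<lambda>x. h x * \<zeta> x) integrable_on {0..T}"
      by (intro integrable_continuous_real continuous_on_mult ch cz)
    moreover have i2: "(\<lambda>x. H x * deriv \<zeta> x) integrable_on {0..T}"
      by (intro integrable_continuous_real continuous_on_mult cH cdz)
    ultimately have hH: "integral {0..T} (\<lambda>x. H x * deriv \<zeta> x) = - integral {0..T} (\<lambda>x. h x * \<zeta> x)"
      using integral_add[OF i1 i2] by simp
    have i3: "(\<lambda>x. g x * deriv \<zeta> x) integrable_on {0..T}"
      by (intro integrable_continuous_real continuous_on_mult cg cdz)
    have "integral {0..T} (\<lambda>t. G t * deriv \<zeta> t) = integral {0..T} (\<lambda>t. g t * deriv \<zeta> t - H t * deriv \<zeta> t)"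
      by (simp add: G_def left_diff_distrib)
    also have "\<dots> = integral {0..T} (\<lambda>t. g t * deriv \<zeta> t) - integral {0..T} (\<lambda>t. H t * deriv \<zeta> t)"
      by (rule integral_diff[OF i3 i2])
    also have "\<dots> = 0" using hH weak[OF z] by simp
    finally show ?thesis .
  qed
  have cst: "G c = G d" if "0 < c" "c < d" "d < T" for c d
    by (rule const_lemma[OF T cG weakG that])
  have Gc: "G x = G (T/2)" if "x \<in> {0..T}" for x
    by (rule endpoint_const[OF T cG cst that])
  have "((\<lambda>x. H x + G (T/2)) has_real_derivative h t) (at t within {0..T})"
    using DERIV_add[OF HD[OF t] DERIV_const[of "G (T/2)"]] by simp
  then show ?thesis
  proof (rule has_field_derivative_transform_within[where d=1])
    show "0 < (1::real)" by simp
    show "t \<in> {0..T}" using t .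
    fix x assume "x \<in> {0..T}" "dist x t < 1"
    then show "H x + G (T/2) = g x" using Gc[of x] by (simp add: G_def)
  qed
qed

lemma weak_deriv_L:
  fixes g h :: "real \<Rightarrow> real"
  assumes T: "0 < T" and cg: "continuous_on {0..T} g" and ch: "continuous_on {0..T} h"
    and weak: "\<And>\<zeta>. test_fun {0<..<T} \<zeta> \<Longrightarrow>
        (\<integral>t. g t * deriv \<zeta> t \<partial>lebesgue_on {0<..<T}) = - (\<integral>t. h t * \<zeta> t \<partial>lebesgue_on {0<..<T})"
    and t: "t \<in> {0..T}"
  shows "(g has_real_derivative h t) (at t within {0..T})"
proof (rule weak_deriv_HK[OF T cg ch _ t])
  fix \<zeta> assume z: "test_fun {0<..<T} \<zeta>"
  note zp = test_fun_props[OF z]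
  have cz: "continuous_on {0..T} \<zeta>" using zp(4) continuous_on_subset by blast
  have cdz: "continuous_on {0..T} (deriv \<zeta>)" using zp(3) continuous_on_subset by blast
  have "(\<integral>t. g t * deriv \<zeta> t \<partial>lebesgue_on {0<..<T}) = integral {0..T} (\<lambda>t. g t * deriv \<zeta> t)"
    by (rule lebesgue_interval_integral(2)) (intro continuous_on_mult cg cdz)
  moreover have "(\<integral>t. h t * \<zeta> t \<partial>lebesgue_on {0<..<T}) = integral {0..T} (\<lambda>t. h t * \<zeta> t)"
    by (rule lebesgue_interval_integral(2)) (intro continuous_on_mult ch cz)
  ultimately show "integral {0..T} (\<lambda>t. g t * deriv \<zeta> t) = - integral {0..T} (\<lambda>t. h t * \<zeta> t)"
    using weak[OF z] by simp
qed

lemma abs_mult_le_sq: "\<bar>(a::real) * b\<bar> \<le> a\<^sup>2 + b\<^sup>2"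
proof -
  have "0 \<le> (\<bar>a\<bar> - \<bar>b\<bar>)\<^sup>2" by simp
  then have "2 * (\<bar>a\<bar> * \<bar>b\<bar>) \<le> a\<^sup>2 + b\<^sup>2"
    by (simp add: power2_eq_square algebra_simps abs_mult_self_eq)
  moreover have "0 \<le> \<bar>a\<bar> * \<bar>b\<bar>" by simp
  ultimately show ?thesis unfolding abs_mult by linarith
qed

lemma L2_meas: "L2 \<Omega> f \<Longrightarrow> f \<in> borel_measurable (lebesgue_on \<Omega>)"
  by (simp add: L2_def)

lemma L2_sq: "L2 \<Omega> f \<Longrightarrow> integrable (lebesgue_on \<Omega>) (\<lambda>x. (f x)\<^sup>2)"
  by (simp add: L2_def)

lemma L2_mult_int:
  assumes "L2 \<Omega> f" "L2 \<Omega> g"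
  shows "integrable (lebesgue_on \<Omega>) (\<lambda>x. f x * g x)"
proof (rule Bochner_Integration.integrable_bound[where f="\<lambda>x. (f x)\<^sup>2 + (g x)\<^sup>2"])
  show "integrable (lebesgue_on \<Omega>) (\<lambda>x. (f x)\<^sup>2 + (g x)\<^sup>2)"
    using assms by (intro Bochner_Integration.integrable_add L2_sq)
  show "(\<lambda>x. f x * g x) \<in> borel_measurable (lebesgue_on \<Omega>)"
    using assms by (intro borel_measurable_times L2_meas)
  show "AE x in lebesgue_on \<Omega>. norm (f x * g x) \<le> norm ((f x)\<^sup>2 + (g x)\<^sup>2)"
    using abs_mult_le_sq by (auto intro!: AE_I2)
qed

lemma L2_add:
  assumes "L2 \<Omega> f" "L2 \<Omega> g"
  shows "L2 \<Omega> (\<lambda>x. f x + g x)"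
proof -
  have "integrable (lebesgue_on \<Omega>) (\<lambda>x. (f x)\<^sup>2 + 2 * (f x * g x) + (g x)\<^sup>2)"
    using assms by (intro Bochner_Integration.integrable_add Bochner_Integration.integrable_mult_right L2_sq L2_mult_int)
  moreover have "(\<lambda>x. (f x)\<^sup>2 + 2 * (f x * g x) + (g x)\<^sup>2) = (\<lambda>x. (f x + g x)\<^sup>2)"
    by (simp add: power2_eq_square algebra_simps)
  ultimately show ?thesis using assms unfolding L2_def by (simp add: borel_measurable_add)
qed

lemma L2_cmult:
  assumes "L2 \<Omega> f"
  shows "L2 \<Omega> (\<lambda>x. c * f x)"
proof -
  have "integrable (lebesgue_on \<Omega>) (\<lambda>x. c\<^sup>2 * (f x)\<^sup>2)"
    using assms by (intro Bochner_Integration.integrable_mult_right L2_sq)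
  then show ?thesis using assms unfolding L2_def by (simp add: power_mult_distrib borel_measurable_times)
qed

lemma L2_diff:
  assumes "L2 \<Omega> f" "L2 \<Omega> g"
  shows "L2 \<Omega> (\<lambda>x. f x - g x)"
  using L2_add[OF assms(1) L2_cmult[OF assms(2), of "-1"]] by simp

lemma finite_lebesgue_on:
  assumes "\<Omega> \<in> sets lebesgue" "emeasure lebesgue \<Omega> < \<infinity>"
  shows "finite_measure (lebesgue_on \<Omega>)"
  using assms by (intro finite_measureI) (simp add: emeasure_restrict_space)

lemma L2_const:
  assumes "\<Omega> \<in> sets lebesgue" "emeasure lebesgue \<Omega> < \<infinity>"
  shows "L2 \<Omega> (\<lambda>x. c)"
proof -
  interpret finite_measure "lebesgue_on \<Omega>" using finite_lebesgue_on[OF assms] .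
  show ?thesis unfolding L2_def by simp
qed

lemma L2_int:
  assumes "\<Omega> \<in> sets lebesgue" "emeasure lebesgue \<Omega> < \<infinity>" "L2 \<Omega> f"
  shows "integrable (lebesgue_on \<Omega>) f"
  using L2_mult_int[OF assms(3) L2_const[OF assms(1,2), of 1]] by simp

definition ipr :: "'a::euclidean_space set \<Rightarrow> ('a \<Rightarrow> real) \<Rightarrow> ('a \<Rightarrow> real) \<Rightarrow> real" where
  "ipr \<Omega> f g = (\<integral>x. f x * g x \<partial>lebesgue_on \<Omega>)"

lemma Hnorm_ip: "Hnorm \<Omega> f = sqrt (ipr \<Omega> f f)"
  by (simp add: Hnorm_def ipr_def power2_eq_square)

lemma ip_nonneg: "0 \<le> ipr \<Omega> f f"
  unfolding ipr_def by (rule Bochner_Integration.integral_nonneg) simp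

lemma Hnorm_sq: "(Hnorm \<Omega> f)\<^sup>2 = ipr \<Omega> f f"
  using ip_nonneg by (simp add: Hnorm_ip)

lemma Hnorm_nonneg: "0 \<le> Hnorm \<Omega> f"
  by (simp add: Hnorm_ip ip_nonneg)

lemma ip_sym: "ipr \<Omega> f g = ipr \<Omega> g f"
  by (simp add: ipr_def mult.commute)

lemma ip_add_left:
  assumes "L2 \<Omega> f" "L2 \<Omega> g" "L2 \<Omega> h"
  shows "ipr \<Omega> (\<lambda>x. f x + g x) h = ipr \<Omega> f h + ipr \<Omega> g h"
  unfolding ipr_def using assms
  by (simp add: distrib_right Bochner_Integration.integral_add L2_mult_int)

lemma ip_diff_left:
  assumes "L2 \<Omega> f" "L2 \<Omega> g" "L2 \<Omega> h"
  shows "ipr \<Omega> (\<lambda>x. f x - g x) h = ipr \<Omega> f h - ipr \<Omega> g h"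
  unfolding ipr_def using assms
  by (simp add: left_diff_distrib Bochner_Integration.integral_diff L2_mult_int)

lemma ip_cmult_left: "ipr \<Omega> (\<lambda>x. c * f x) g = c * ipr \<Omega> f g"
  unfolding ipr_def by (simp add: mult.assoc)

lemma ip_add_right:
  assumes "L2 \<Omega> f" "L2 \<Omega> g" "L2 \<Omega> h"
  shows "ipr \<Omega> h (\<lambda>x. f x + g x) = ipr \<Omega> h f + ipr \<Omega> h g"
  using ip_add_left[OF assms] ip_sym by metis

lemma ip_diff_right:
  assumes "L2 \<Omega> f" "L2 \<Omega> g" "L2 \<Omega> h"
  shows "ipr \<Omega> h (\<lambda>x. f x - g x) = ipr \<Omega> h f - ipr \<Omega> h g"
  using ip_diff_left[OF assms] ip_sym by metis

lemma ip_cmult_right: "ipr \<Omega> g (\<lambda>x. c * f x) = c * ipr \<Omega> g f"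
  using ip_cmult_left ip_sym by metis

lemma quad_disc:
  fixes A B C :: real
  assumes q: "\<And>l. 0 \<le> A - 2 * l * B + l\<^sup>2 * C" and C0: "0 \<le> C"
  shows "B\<^sup>2 \<le> A * C"
proof (cases "C = 0")
  case True
  show ?thesis
  proof (cases "B = 0")
    case True then show ?thesis using q[of 0] \<open>C = 0\<close> by simp
  next
    case False
    have "0 \<le> A - 2 * ((A + 1) / (2 * B)) * B" using q[of "(A + 1) / (2 * B)"] \<open>C = 0\<close> by simp
    also have "\<dots> = -1" using False by (simp add: field_simps)
    finally show ?thesis by simp
  qed
next
  case False
  then have C: "0 < C" using C0 by simp
  have "0 \<le> A - 2 * (B / C) * B + (B / C)\<^sup>2 * C" using q by blast
  also have "\<dots> = A - B\<^sup>2 / C" using C by (simp add: power2_eq_square field_simps)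
  finally show ?thesis using C by (simp add: field_simps)
qed

lemma ip_quad:
  assumes f: "L2 \<Omega> f" and g: "L2 \<Omega> g"
  shows "ipr \<Omega> (\<lambda>x. f x - l * g x) (\<lambda>x. f x - l * g x) = ipr \<Omega> f f - 2 * l * ipr \<Omega> f g + l\<^sup>2 * ipr \<Omega> g g"
proof -
  have lg: "L2 \<Omega> (\<lambda>x. l * g x)" using L2_cmult[OF g] .
  have d: "L2 \<Omega> (\<lambda>x. f x - l * g x)" using L2_diff[OF f lg] .
  have "ipr \<Omega> (\<lambda>x. f x - l * g x) (\<lambda>x. f x - l * g x)
      = ipr \<Omega> f (\<lambda>x. f x - l * g x) - ipr \<Omega> (\<lambda>x. l * g x) (\<lambda>x. f x - l * g x)"
    by (rule ip_diff_left[OF f lg d])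
  also have "\<dots> = (ipr \<Omega> f f - ipr \<Omega> f (\<lambda>x. l * g x)) - (ipr \<Omega> (\<lambda>x. l * g x) f - ipr \<Omega> (\<lambda>x. l * g x) (\<lambda>x. l * g x))"
    using ip_diff_right[OF f lg f] ip_diff_right[OF f lg lg] by simp
  also have "\<dots> = ipr \<Omega> f f - 2 * l * ipr \<Omega> f g + l\<^sup>2 * ipr \<Omega> g g"
    by (simp add: ip_cmult_left ip_cmult_right ip_sym[of \<Omega> g f] power2_eq_square algebra_simps)
  finally show ?thesis .
qed

lemma CS_sq:
  assumes f: "L2 \<Omega> f" and g: "L2 \<Omega> g"
  shows "(ipr \<Omega> f g)\<^sup>2 \<le> ipr \<Omega> f f * ipr \<Omega> g g"
proof (rule quad_disc)
  fix l
  show "0 \<le> ipr \<Omega> f f - 2 * l * ipr \<Omega> f g + l\<^sup>2 * ipr \<Omega> g g"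
    using ip_quad[OF f g, of l] ip_nonneg[of \<Omega> "\<lambda>x. f x - l * g x"] by simp
qed (rule ip_nonneg)

lemma CS:
  assumes f: "L2 \<Omega> f" and g: "L2 \<Omega> g"
  shows "\<bar>ipr \<Omega> f g\<bar> \<le> Hnorm \<Omega> f * Hnorm \<Omega> g"
proof -
  have "sqrt ((ipr \<Omega> f g)\<^sup>2) \<le> sqrt (ipr \<Omega> f f * ipr \<Omega> g g)"
    using CS_sq[OF f g] by (rule real_sqrt_le_mono)
  then show ?thesis by (simp add: Hnorm_ip real_sqrt_mult)
qed

lemma Hnorm_add:
  assumes f: "L2 \<Omega> f" and g: "L2 \<Omega> g"
  shows "Hnorm \<Omega> (\<lambda>x. f x + g x) \<le> Hnorm \<Omega> f + Hnorm \<Omega> g"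
proof -
  have s: "L2 \<Omega> (\<lambda>x. f x + g x)" using L2_add[OF f g] .
  have "ipr \<Omega> (\<lambda>x. f x + g x) (\<lambda>x. f x + g x) = ipr \<Omega> f f + 2 * ipr \<Omega> f g + ipr \<Omega> g g"
    using ip_add_left[OF f g s] ip_add_right[OF f g f] ip_add_right[OF f g g] ip_sym[of \<Omega> g f] by simp
  also have "\<dots> \<le> (Hnorm \<Omega> f)\<^sup>2 + 2 * (Hnorm \<Omega> f * Hnorm \<Omega> g) + (Hnorm \<Omega> g)\<^sup>2"
    using CS[OF f g] by (simp add: Hnorm_sq)
  also have "\<dots> = (Hnorm \<Omega> f + Hnorm \<Omega> g)\<^sup>2" by (simp add: power2_eq_square algebra_simps)
  finally have "(Hnorm \<Omega> (\<lambda>x. f x + g x))\<^sup>2 \<le> (Hnorm \<Omega> f + Hnorm \<Omega> g)\<^sup>2"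
    by (simp add: Hnorm_sq)
  then show ?thesis using Hnorm_nonneg[of \<Omega> f] Hnorm_nonneg[of \<Omega> g]
    by (simp add: power2_le_iff_abs_le)
qed

lemma Hnorm_cmult: "Hnorm \<Omega> (\<lambda>x. c * f x) = \<bar>c\<bar> * Hnorm \<Omega> f"
proof -
  have "ipr \<Omega> (\<lambda>x. c * f x) (\<lambda>x. c * f x) = c\<^sup>2 * ipr \<Omega> f f"
    by (simp add: ip_cmult_left ip_cmult_right power2_eq_square)
  then show ?thesis by (simp add: Hnorm_ip real_sqrt_mult)
qed

lemma Hnorm_diff:
  assumes f: "L2 \<Omega> f" and g: "L2 \<Omega> g"
  shows "Hnorm \<Omega> (\<lambda>x. f x - g x) \<le> Hnorm \<Omega> f + Hnorm \<Omega> g"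
  using Hnorm_add[OF f L2_cmult[OF g, of "-1"]] Hnorm_cmult[of \<Omega> "-1" g] by simp

lemma CH_L2: "CH \<Omega> T f \<Longrightarrow> t \<in> {0..T} \<Longrightarrow> L2 \<Omega> (f t)"
  by (simp add: CH_def)

lemma ev_within: "\<forall>\<^sub>F s in at t within S. s \<in> S"
  by (simp add: eventually_at_filter)

lemma CH_ip_cont:
  assumes ch: "CH \<Omega> T f" and v: "L2 \<Omega> v"
  shows "continuous_on {0..T} (\<lambda>t. ipr \<Omega> (f t) v)"
proof -
  have "((\<lambda>s. ipr \<Omega> (f s) v) \<longlongrightarrow> ipr \<Omega> (f t) v) (at t within {0..T})" if t: "t \<in> {0..T}" for t
  proof -
    have lim: "((\<lambda>s. Hnorm \<Omega> (\<lambda>x. f s x - f t x) * Hnorm \<Omega> v) \<longlongrightarrow> 0) (at t within {0..T})"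
      using ch t unfolding CH_def by (intro tendsto_mult_left_zero) blast
    have "\<forall>\<^sub>F s in at t within {0..T}. norm (ipr \<Omega> (f s) v - ipr \<Omega> (f t) v) \<le> Hnorm \<Omega> (\<lambda>x. f s x - f t x) * Hnorm \<Omega> v"
      using ev_within
    proof (rule eventually_mono)
      fix s assume s: "s \<in> {0..T}"
      have "ipr \<Omega> (f s) v - ipr \<Omega> (f t) v = ipr \<Omega> (\<lambda>x. f s x - f t x) v"
        using ip_diff_left[OF CH_L2[OF ch s] CH_L2[OF ch t] v] by simp
      then show "norm (ipr \<Omega> (f s) v - ipr \<Omega> (f t) v) \<le> Hnorm \<Omega> (\<lambda>x. f s x - f t x) * Hnorm \<Omega> v"
        using CS[OF L2_diff[OF CH_L2[OF ch s] CH_L2[OF ch t]] v] by simp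
    qed
    from Lim_null_comparison[OF this lim] show ?thesis by (simp add: LIM_zero_iff)
  qed
  then show ?thesis
    by (simp add: continuous_on_eq_continuous_within continuous_within)
qed

lemma mvt_between:
  fixes G G' :: "real \<Rightarrow> real"
  assumes d: "\<And>x. x \<in> {0..T} \<Longrightarrow> (G has_real_derivative G' x) (at x within {0..T})"
    and a: "a \<in> {0..T}" and b: "b \<in> {0..T}"
  shows "\<exists>\<xi>\<in>{0..T}. \<bar>\<xi> - b\<bar> \<le> \<bar>a - b\<bar> \<and> G a - G b = G' \<xi> * (a - b)"
proof -
  consider "a < b" | "a = b" | "b < a" by linarith
  then show ?thesis
  proof cases
    case 1
    have "\<exists>x\<in>{a<..<b}. G b - G a = G' x * (b - a)"
    proof (rule mvt_simple[OF 1, where f'="\<lambda>x h. G' x * h"])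
      fix x assume "a \<le> x" "x \<le> b"
      then have "x \<in> {0..T}" "{a..b} \<subseteq> {0..T}" using a b by auto
      from has_field_derivative_subset[OF d[OF this(1)] this(2)]
      show "(G has_derivative (\<lambda>h. G' x * h)) (at x within {a..b})"
        by (simp add: has_field_derivative_def)
    qed
    then obtain x where "x \<in> {a<..<b}" "G b - G a = G' x * (b - a)" by blast
    then show ?thesis using a b by (intro bexI[of _ x]) (auto simp: algebra_simps)
  next
    case 2
    then show ?thesis using b by auto
  next
    case 3
    have "\<exists>x\<in>{b<..<a}. G a - G b = G' x * (a - b)"
    proof (rule mvt_simple[OF 3, where f'="\<lambda>x h. G' x * h"])
      fix x assume "b \<le> x" "x \<le> a"
      then have "x \<in> {0..T}" "{b..a} \<subseteq> {0..T}" using a b by auto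
      from has_field_derivative_subset[OF d[OF this(1)] this(2)]
      show "(G has_derivative (\<lambda>h. G' x * h)) (at x within {b..a})"
        by (simp add: has_field_derivative_def)
    qed
    then obtain x where "x \<in> {b<..<a}" "G a - G b = G' x * (a - b)" by blast
    then show ?thesis using a b by (intro bexI[of _ x]) auto
  qed
qed

lemma Hnorm_zero: "Hnorm \<Omega> (\<lambda>x. 0) = 0"
  by (simp add: Hnorm_def)

context
  fixes \<Omega> :: "'a::euclidean_space set" and T :: real and f df :: "real \<Rightarrow> 'a \<Rightarrow> real"
  assumes \<Omega>m: "\<Omega> \<in> sets lebesgue" and fin: "emeasure lebesgue \<Omega> < \<infinity>" and T: "0 < T"
    and CHf: "CH \<Omega> T f" and CHd: "CH \<Omega> T df" and td: "tderiv \<Omega> T f df"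
begin

lemma H_deriv_weak:
  assumes v: "L2 \<Omega> v" and t: "t \<in> {0..T}"
  shows "((\<lambda>s. ipr \<Omega> (f s) v) has_real_derivative ipr \<Omega> (df t) v) (at t within {0..T})"
proof (rule weak_deriv_L[OF T CH_ip_cont[OF CHf v] CH_ip_cont[OF CHd v] _ t])
  fix \<zeta> assume "test_fun {0<..<T} \<zeta>"
  then show "(\<integral>t. ipr \<Omega> (f t) v * deriv \<zeta> t \<partial>lebesgue_on {0<..<T}) =
      - (\<integral>t. ipr \<Omega> (df t) v * \<zeta> t \<partial>lebesgue_on {0<..<T})"
    using td v unfolding tderiv_def ipr_def by blast
qed

lemma H_rem:
  assumes \<tau>: "\<tau> \<in> {0..T}" and e: "0 < e"
  shows "\<exists>d>0. \<forall>s\<in>{0..T}. \<bar>s - \<tau>\<bar> < d \<longrightarrow>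
           Hnorm \<Omega> (\<lambda>x. f s x - f \<tau> x - (s - \<tau>) * df \<tau> x) \<le> e * \<bar>s - \<tau>\<bar>"
proof -
  have "((\<lambda>s. Hnorm \<Omega> (\<lambda>x. df s x - df \<tau> x)) \<longlongrightarrow> 0) (at \<tau> within {0..T})"
    using CHd \<tau> unfolding CH_def by blast
  then have "\<forall>\<^sub>F s in at \<tau> within {0..T}. dist (Hnorm \<Omega> (\<lambda>x. df s x - df \<tau> x)) 0 < e"
    using e unfolding tendsto_iff by blast
  then obtain d where d: "d > 0" "\<forall>s\<in>{0..T}. s \<noteq> \<tau> \<and> dist s \<tau> < d \<longrightarrow> dist (Hnorm \<Omega> (\<lambda>x. df s x - df \<tau> x)) 0 < e"
    unfolding eventually_at by blast
  have dd: "Hnorm \<Omega> (\<lambda>x. df \<xi> x - df \<tau> x) \<le> e" if "\<xi> \<in> {0..T}" "\<bar>\<xi> - \<tau>\<bar> < d" for \<xi>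
  proof (cases "\<xi> = \<tau>")
    case True then show ?thesis using e by (simp add: Hnorm_zero)
  next
    case False then show ?thesis using d(2) that by (auto simp: dist_real_def)
  qed
  show ?thesis
  proof (intro exI[of _ d] conjI ballI impI)
    show "0 < d" using d(1) .
    fix s assume s: "s \<in> {0..T}" and sd: "\<bar>s - \<tau>\<bar> < d"
    define v where "v x = f s x - f \<tau> x - (s - \<tau>) * df \<tau> x" for x
    have Lfs: "L2 \<Omega> (f s)" using CH_L2[OF CHf s] .
    have Lft: "L2 \<Omega> (f \<tau>)" using CH_L2[OF CHf \<tau>] .
    have Ldt: "L2 \<Omega> (df \<tau>)" using CH_L2[OF CHd \<tau>] .
    have Ldt': "L2 \<Omega> (\<lambda>x. (s - \<tau>) * df \<tau> x)" using L2_cmult[OF Ldt] .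
    have Lv: "L2 \<Omega> v" unfolding v_def[abs_def] by (intro L2_diff Lfs Lft Ldt')
    define G where "G r = ipr \<Omega> (f r) v - (r - \<tau>) * ipr \<Omega> (df \<tau>) v" for r
    have Gd: "(G has_real_derivative (ipr \<Omega> (df r) v - ipr \<Omega> (df \<tau>) v)) (at r within {0..T})"
      if "r \<in> {0..T}" for r
      unfolding G_def[abs_def]
      by (rule DERIV_diff[OF H_deriv_weak[OF Lv that]]) (auto intro!: derivative_eq_intros)
    obtain \<xi> where \<xi>: "\<xi> \<in> {0..T}" "\<bar>\<xi> - \<tau>\<bar> \<le> \<bar>s - \<tau>\<bar>"
      "G s - G \<tau> = (ipr \<Omega> (df \<xi>) v - ipr \<Omega> (df \<tau>) v) * (s - \<tau>)"
      using mvt_between[OF Gd s \<tau>] by blast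
    have "G s - G \<tau> = ipr \<Omega> (f s) v - ipr \<Omega> (f \<tau>) v - (s - \<tau>) * ipr \<Omega> (df \<tau>) v"
      by (simp add: G_def)
    also have "\<dots> = ipr \<Omega> v v"
    proof -
      have "ipr \<Omega> v v = ipr \<Omega> (\<lambda>x. f s x - f \<tau> x) v - ipr \<Omega> (\<lambda>x. (s - \<tau>) * df \<tau> x) v"
        unfolding v_def[abs_def] by (rule ip_diff_left[OF L2_diff[OF Lfs Lft] Ldt' Lv[unfolded v_def[abs_def]]])
      also have "\<dots> = ipr \<Omega> (f s) v - ipr \<Omega> (f \<tau>) v - (s - \<tau>) * ipr \<Omega> (df \<tau>) v"
        using ip_diff_left[OF Lfs Lft Lv] ip_cmult_left by simp
      finally show ?thesis by simp
    qed
    finally have vv: "ipr \<Omega> v v = (s - \<tau>) * ipr \<Omega> (\<lambda>x. df \<xi> x - df \<tau> x) v"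
      using \<xi>(3) ip_diff_left[OF CH_L2[OF CHd \<xi>(1)] Ldt Lv] by (simp add: mult.commute)
    have "(Hnorm \<Omega> v)\<^sup>2 \<le> \<bar>s - \<tau>\<bar> * (Hnorm \<Omega> (\<lambda>x. df \<xi> x - df \<tau> x) * Hnorm \<Omega> v)"
    proof -
      have "(Hnorm \<Omega> v)\<^sup>2 = (s - \<tau>) * ipr \<Omega> (\<lambda>x. df \<xi> x - df \<tau> x) v" using vv Hnorm_sq by metis
      also have "\<dots> \<le> \<bar>s - \<tau>\<bar> * \<bar>ipr \<Omega> (\<lambda>x. df \<xi> x - df \<tau> x) v\<bar>"
        by (metis abs_ge_self abs_mult)
      also have "\<dots> \<le> \<bar>s - \<tau>\<bar> * (Hnorm \<Omega> (\<lambda>x. df \<xi> x - df \<tau> x) * Hnorm \<Omega> v)"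
        by (intro mult_left_mono CS L2_diff CH_L2[OF CHd \<xi>(1)] Ldt Lv) simp
      finally show ?thesis .
    qed
    also have "\<dots> \<le> \<bar>s - \<tau>\<bar> * (e * Hnorm \<Omega> v)"
      using dd[OF \<xi>(1)] \<xi>(2) sd Hnorm_nonneg[of \<Omega> v]
      by (intro mult_left_mono mult_right_mono) auto
    finally have sq: "(Hnorm \<Omega> v)\<^sup>2 \<le> (e * \<bar>s - \<tau>\<bar>) * Hnorm \<Omega> v" by (simp add: ac_simps)
    show "Hnorm \<Omega> (\<lambda>x. f s x - f \<tau> x - (s - \<tau>) * df \<tau> x) \<le> e * \<bar>s - \<tau>\<bar>"
    proof (cases "Hnorm \<Omega> v = 0")
      case True then show ?thesis using e by (simp add: v_def[abs_def])
    next
      case False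
      then have "0 < Hnorm \<Omega> v" using Hnorm_nonneg[of \<Omega> v] by simp
      then have "Hnorm \<Omega> v \<le> e * \<bar>s - \<tau>\<bar>" using sq by (simp add: power2_eq_square)
      then show ?thesis by (simp add: v_def[abs_def])
    qed
  qed
qed

end

lemma deriv_eps:
  fixes F :: "real \<Rightarrow> real"
  assumes h: "\<And>e. 0 < e \<Longrightarrow> \<exists>d>0. \<forall>y\<in>S. \<bar>y - x\<bar> < d \<longrightarrow> \<bar>F y - F x - D * (y - x)\<bar> \<le> e * \<bar>y - x\<bar>"
  shows "(F has_real_derivative D) (at x within S)"
proof -
  have "((\<lambda>y. (F y - F x) / (y - x)) \<longlongrightarrow> D) (at x within S)"
    unfolding tendsto_iff eventually_at
  proof (intro allI impI)
    fix e :: real assume e: "0 < e"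
    then obtain d where d: "d > 0" "\<forall>y\<in>S. \<bar>y - x\<bar> < d \<longrightarrow> \<bar>F y - F x - D * (y - x)\<bar> \<le> (e/2) * \<bar>y - x\<bar>"
      using h[of "e/2"] by auto
    show "\<exists>d>0. \<forall>y\<in>S. y \<noteq> x \<and> dist y x < d \<longrightarrow> dist ((F y - F x) / (y - x)) D < e"
    proof (intro exI[of _ d] conjI ballI impI)
      show "0 < d" using d(1) .
      fix y assume yS: "y \<in> S" and y: "y \<noteq> x \<and> dist y x < d"
      then have pos: "0 < \<bar>y - x\<bar>" by simp
      have "(F y - F x) / (y - x) - D = (F y - F x - D * (y - x)) / (y - x)"
        using pos by (simp add: field_simps)
      then have "\<bar>(F y - F x) / (y - x) - D\<bar> = \<bar>F y - F x - D * (y - x)\<bar> / \<bar>y - x\<bar>"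
        by (simp add: abs_divide)
      also have "\<dots> \<le> (e/2) * \<bar>y - x\<bar> / \<bar>y - x\<bar>"
        using d(2) yS y pos by (intro divide_right_mono) (auto simp: dist_real_def)
      also have "\<dots> = e/2" using pos by simp
      finally show "dist ((F y - F x) / (y - x)) D < e" using e by (simp add: dist_real_def)
    qed
  qed
  then show ?thesis by (simp add: has_field_derivative_iff)
qed

lemma ip_expand:
  assumes a: "L2 \<Omega> a" and w: "L2 \<Omega> w"
  shows "ipr \<Omega> (\<lambda>x. a x + w x) (\<lambda>x. a x + w x) = ipr \<Omega> a a + 2 * ipr \<Omega> a w + ipr \<Omega> w w"
  using ip_add_left[OF a w L2_add[OF a w]] ip_add_right[OF a w a] ip_add_right[OF a w w] ip_sym[of \<Omega> w a]
  by simp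

lemma int_sq_ip: "(\<integral>x. (g x)\<^sup>2 \<partial>lebesgue_on \<Omega>) = ipr \<Omega> g g"
  by (simp add: ipr_def power2_eq_square)

context
  fixes \<Omega> :: "'a::euclidean_space set" and T :: real and f df :: "real \<Rightarrow> 'a \<Rightarrow> real"
  assumes \<Omega>m: "\<Omega> \<in> sets lebesgue" and fin: "emeasure lebesgue \<Omega> < \<infinity>" and T: "0 < T"
    and CHf: "CH \<Omega> T f" and CHd: "CH \<Omega> T df" and td: "tderiv \<Omega> T f df"
begin

lemmas Hrem = H_rem[OF \<Omega>m fin T CHf CHd td]

lemma deriv_sqnorm:
  assumes w0: "L2 \<Omega> w0" and \<tau>: "\<tau> \<in> {0..T}"
  shows "((\<lambda>s. \<integral>x. (f s x - w0 x)\<^sup>2 \<partial>lebesgue_on \<Omega>) has_real_derivative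
           2 * (\<integral>x. (f \<tau> x - w0 x) * df \<tau> x \<partial>lebesgue_on \<Omega>)) (at \<tau> within {0..T})"
proof -
  define a where "a x = f \<tau> x - w0 x" for x
  have La: "L2 \<Omega> a" unfolding a_def[abs_def] by (intro L2_diff CH_L2[OF CHf \<tau>] w0)
  have Ldt: "L2 \<Omega> (df \<tau>)" using CH_L2[OF CHd \<tau>] .
  define A where "A = Hnorm \<Omega> a"
  define K where "K = Hnorm \<Omega> (df \<tau>)"
  have A0: "0 \<le> A" "0 \<le> K" by (simp_all add: A_def K_def Hnorm_nonneg)
  have tgt: "2 * (\<integral>x. (f \<tau> x - w0 x) * df \<tau> x \<partial>lebesgue_on \<Omega>) = 2 * ipr \<Omega> a (df \<tau>)"
    by (simp add: ipr_def a_def[abs_def])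
  have main: "\<exists>d>0. \<forall>s\<in>{0..T}. \<bar>s - \<tau>\<bar> < d \<longrightarrow>
      \<bar>(\<integral>x. (f s x - w0 x)\<^sup>2 \<partial>lebesgue_on \<Omega>) - (\<integral>x. (f \<tau> x - w0 x)\<^sup>2 \<partial>lebesgue_on \<Omega>)
        - 2 * ipr \<Omega> a (df \<tau>) * (s - \<tau>)\<bar> \<le> e * \<bar>s - \<tau>\<bar>" if e: "0 < e" for e
  proof -
    define e1 where "e1 = min 1 (e / (2 * (2 * A + 1)))"
    have e1: "0 < e1" "e1 \<le> 1" "2 * A * e1 \<le> e / 2"
    proof -
      show "0 < e1" using e A0 by (simp add: e1_def)
      show "e1 \<le> 1" by (simp add: e1_def)
      have "e1 \<le> e / (2 * (2 * A + 1))" by (simp add: e1_def)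
      then have "2 * A * e1 \<le> 2 * A * (e / (2 * (2 * A + 1)))" using A0 by (intro mult_left_mono) auto
      also have "\<dots> \<le> e / 2" using A0 e by (simp add: field_simps)
      finally show "2 * A * e1 \<le> e / 2" .
    qed
    obtain d1 where d1: "d1 > 0" "\<forall>s\<in>{0..T}. \<bar>s - \<tau>\<bar> < d1 \<longrightarrow>
           Hnorm \<Omega> (\<lambda>x. f s x - f \<tau> x - (s - \<tau>) * df \<tau> x) \<le> e1 * \<bar>s - \<tau>\<bar>"
      using Hrem[OF \<tau> e1(1)] by blast
    define d where "d = min d1 (e / (2 * (K + 1)\<^sup>2))"
    have d: "0 < d" "d \<le> d1" "d * (K + 1)\<^sup>2 \<le> e / 2"
    proof -
      show "0 < d" using d1 e A0 by (simp add: d_def)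
      show "d \<le> d1" by (simp add: d_def)
      have "d \<le> e / (2 * (K + 1)\<^sup>2)" by (simp add: d_def)
      then have "d * (K + 1)\<^sup>2 \<le> e / (2 * (K + 1)\<^sup>2) * (K + 1)\<^sup>2" by (intro mult_right_mono) auto
      also have "\<dots> = e / 2" using A0 by (simp add: field_simps)
      finally show "d * (K + 1)\<^sup>2 \<le> e / 2" .
    qed
    show ?thesis
    proof (intro exI[of _ d] conjI ballI impI)
      show "0 < d" using d(1) .
      fix s assume s: "s \<in> {0..T}" and sd: "\<bar>s - \<tau>\<bar> < d"
      define r where "r x = f s x - f \<tau> x - (s - \<tau>) * df \<tau> x" for x
      define w where "w x = f s x - f \<tau> x" for x
      have Lfs: "L2 \<Omega> (f s)" using CH_L2[OF CHf s] .
      have Lft: "L2 \<Omega> (f \<tau>)" using CH_L2[OF CHf \<tau>] .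
      have Lw: "L2 \<Omega> w" unfolding w_def[abs_def] by (intro L2_diff Lfs Lft)
      have Lc: "L2 \<Omega> (\<lambda>x. (s - \<tau>) * df \<tau> x)" using L2_cmult[OF Ldt] .
      have Lr: "L2 \<Omega> r" unfolding r_def[abs_def] by (intro L2_diff Lfs Lft Lc)
      have hr: "Hnorm \<Omega> r \<le> e1 * \<bar>s - \<tau>\<bar>" using d1(2) s sd d(2) unfolding r_def[abs_def] by auto
      have wr: "w = (\<lambda>x. (s - \<tau>) * df \<tau> x + r x)" by (intro ext) (simp add: w_def r_def)
      have hw: "Hnorm \<Omega> w \<le> \<bar>s - \<tau>\<bar> * (K + 1)"
      proof -
        have "Hnorm \<Omega> w \<le> Hnorm \<Omega> (\<lambda>x. (s - \<tau>) * df \<tau> x) + Hnorm \<Omega> r"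
          unfolding wr by (rule Hnorm_add[OF Lc Lr])
        also have "\<dots> \<le> \<bar>s - \<tau>\<bar> * K + e1 * \<bar>s - \<tau>\<bar>"
          using hr by (simp add: Hnorm_cmult K_def)
        also have "\<dots> \<le> \<bar>s - \<tau>\<bar> * (K + 1)"
          using mult_right_mono[OF e1(2), of "\<bar>s - \<tau>\<bar>"] by (simp add: algebra_simps)
        finally show ?thesis .
      qed
      have fs: "(\<integral>x. (f s x - w0 x)\<^sup>2 \<partial>lebesgue_on \<Omega>) = ipr \<Omega> (\<lambda>x. a x + w x) (\<lambda>x. a x + w x)"
        unfolding int_sq_ip by (simp add: a_def w_def)
      have ft: "(\<integral>x. (f \<tau> x - w0 x)\<^sup>2 \<partial>lebesgue_on \<Omega>) = ipr \<Omega> a a"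
        unfolding int_sq_ip by (simp add: a_def[abs_def])
      have aw: "ipr \<Omega> a w = (s - \<tau>) * ipr \<Omega> a (df \<tau>) + ipr \<Omega> a r"
        unfolding wr using ip_add_right[OF Lc Lr La] ip_cmult_right by simp
      have eq: "(\<integral>x. (f s x - w0 x)\<^sup>2 \<partial>lebesgue_on \<Omega>) - (\<integral>x. (f \<tau> x - w0 x)\<^sup>2 \<partial>lebesgue_on \<Omega>)
          - 2 * ipr \<Omega> a (df \<tau>) * (s - \<tau>) = 2 * ipr \<Omega> a r + ipr \<Omega> w w"
        unfolding fs ft ip_expand[OF La Lw] aw by (simp add: algebra_simps)
      have b1: "\<bar>2 * ipr \<Omega> a r\<bar> \<le> e / 2 * \<bar>s - \<tau>\<bar>"
      proof -
        have "\<bar>2 * ipr \<Omega> a r\<bar> \<le> 2 * (A * Hnorm \<Omega> r)" using CS[OF La Lr] by (simp add: A_def)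
        also have "\<dots> \<le> 2 * (A * (e1 * \<bar>s - \<tau>\<bar>))" using hr A0 by (intro mult_left_mono) auto
        also have "\<dots> = (2 * A * e1) * \<bar>s - \<tau>\<bar>" by simp
        also have "\<dots> \<le> e / 2 * \<bar>s - \<tau>\<bar>" using e1(3) by (intro mult_right_mono) auto
        finally show ?thesis .
      qed
      have b2: "\<bar>ipr \<Omega> w w\<bar> \<le> e / 2 * \<bar>s - \<tau>\<bar>"
      proof -
        have "\<bar>ipr \<Omega> w w\<bar> = (Hnorm \<Omega> w)\<^sup>2" using ip_nonneg[of \<Omega> w] by (simp add: Hnorm_sq)
        also have "\<dots> \<le> (\<bar>s - \<tau>\<bar> * (K + 1))\<^sup>2"
          using hw Hnorm_nonneg[of \<Omega> w] by (intro power_mono) auto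
        also have "\<dots> = \<bar>s - \<tau>\<bar> * (\<bar>s - \<tau>\<bar> * (K + 1)\<^sup>2)" by (simp add: power2_eq_square)
        also have "\<dots> \<le> \<bar>s - \<tau>\<bar> * (d * (K + 1)\<^sup>2)"
          using sd by (intro mult_left_mono mult_right_mono) auto
        also have "\<dots> \<le> \<bar>s - \<tau>\<bar> * (e / 2)" using d(3) by (intro mult_left_mono) auto
        also have "\<dots> = e / 2 * \<bar>s - \<tau>\<bar>" by simp
        finally show ?thesis .
      qed
      show "\<bar>(\<integral>x. (f s x - w0 x)\<^sup>2 \<partial>lebesgue_on \<Omega>) - (\<integral>x. (f \<tau> x - w0 x)\<^sup>2 \<partial>lebesgue_on \<Omega>)
        - 2 * ipr \<Omega> a (df \<tau>) * (s - \<tau>)\<bar> \<le> e * \<bar>s - \<tau>\<bar>"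
        unfolding eq using b1 b2 by linarith
    qed
  qed
  have "((\<lambda>s. \<integral>x. (f s x - w0 x)\<^sup>2 \<partial>lebesgue_on \<Omega>) has_real_derivative 2 * ipr \<Omega> a (df \<tau>)) (at \<tau> within {0..T})"
    by (rule deriv_eps) (use main in blast)
  then show ?thesis unfolding tgt .
qed

lemma deriv_mean:
  assumes \<tau>: "\<tau> \<in> {0..T}"
  shows "((\<lambda>s. \<integral>x. 1 + f s x \<partial>lebesgue_on \<Omega>) has_real_derivative
           (\<integral>x. df \<tau> x \<partial>lebesgue_on \<Omega>)) (at \<tau> within {0..T})"
proof (rule deriv_eps)
  fix e :: real assume e: "0 < e"
  have L1: "L2 \<Omega> (\<lambda>x. 1)" using L2_const[OF \<Omega>m fin] .
  define C where "C = Hnorm \<Omega> (\<lambda>x. 1)"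
  have C0: "0 \<le> C" by (simp add: C_def Hnorm_nonneg)
  define e1 where "e1 = e / (C + 1)"
  have e1: "0 < e1" "e1 * C \<le> e" using e C0 by (auto simp: e1_def field_simps)
  obtain d1 where d1: "d1 > 0" "\<forall>s\<in>{0..T}. \<bar>s - \<tau>\<bar> < d1 \<longrightarrow>
         Hnorm \<Omega> (\<lambda>x. f s x - f \<tau> x - (s - \<tau>) * df \<tau> x) \<le> e1 * \<bar>s - \<tau>\<bar>"
    using Hrem[OF \<tau> e1(1)] by blast
  show "\<exists>d>0. \<forall>y\<in>{0..T}. \<bar>y - \<tau>\<bar> < d \<longrightarrow>
      \<bar>(\<integral>x. 1 + f y x \<partial>lebesgue_on \<Omega>) - (\<integral>x. 1 + f \<tau> x \<partial>lebesgue_on \<Omega>) - (\<integral>x. df \<tau> x \<partial>lebesgue_on \<Omega>) * (y - \<tau>)\<bar>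
        \<le> e * \<bar>y - \<tau>\<bar>"
  proof (intro exI[of _ d1] conjI ballI impI)
    show "0 < d1" using d1(1) .
    fix s assume s: "s \<in> {0..T}" and sd: "\<bar>s - \<tau>\<bar> < d1"
    define r where "r x = f s x - f \<tau> x - (s - \<tau>) * df \<tau> x" for x
    have Lfs: "L2 \<Omega> (f s)" using CH_L2[OF CHf s] .
    have Lft: "L2 \<Omega> (f \<tau>)" using CH_L2[OF CHf \<tau>] .
    have Ldt: "L2 \<Omega> (df \<tau>)" using CH_L2[OF CHd \<tau>] .
    have Lc: "L2 \<Omega> (\<lambda>x. (s - \<tau>) * df \<tau> x)" using L2_cmult[OF Ldt] .
    have Lr: "L2 \<Omega> r" unfolding r_def[abs_def] by (intro L2_diff Lfs Lft Lc)
    have hr: "Hnorm \<Omega> r \<le> e1 * \<bar>s - \<tau>\<bar>" using d1(2) s sd unfolding r_def[abs_def] by auto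
    have i1: "integrable (lebesgue_on \<Omega>) (\<lambda>x. 1 + f s x)" using L2_int[OF \<Omega>m fin L2_add[OF L1 Lfs]] .
    have i2: "integrable (lebesgue_on \<Omega>) (\<lambda>x. 1 + f \<tau> x)" using L2_int[OF \<Omega>m fin L2_add[OF L1 Lft]] .
    have i3: "integrable (lebesgue_on \<Omega>) (\<lambda>x. (s - \<tau>) * df \<tau> x)" using L2_int[OF \<Omega>m fin Lc] .
    have "(\<integral>x. 1 + f s x \<partial>lebesgue_on \<Omega>) - (\<integral>x. 1 + f \<tau> x \<partial>lebesgue_on \<Omega>) - (\<integral>x. df \<tau> x \<partial>lebesgue_on \<Omega>) * (s - \<tau>)
        = (\<integral>x. (1 + f s x) - (1 + f \<tau> x) \<partial>lebesgue_on \<Omega>) - (\<integral>x. (s - \<tau>) * df \<tau> x \<partial>lebesgue_on \<Omega>)"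
      using Bochner_Integration.integral_diff[OF i1 i2] by (simp add: mult.commute)
    also have "\<dots> = (\<integral>x. (1 + f s x) - (1 + f \<tau> x) - (s - \<tau>) * df \<tau> x \<partial>lebesgue_on \<Omega>)"
      using Bochner_Integration.integral_diff[OF Bochner_Integration.integrable_diff[OF i1 i2] i3] by simp
    also have "\<dots> = ipr \<Omega> r (\<lambda>x. 1)" by (simp add: ipr_def r_def)
    finally have eq: "(\<integral>x. 1 + f s x \<partial>lebesgue_on \<Omega>) - (\<integral>x. 1 + f \<tau> x \<partial>lebesgue_on \<Omega>) - (\<integral>x. df \<tau> x \<partial>lebesgue_on \<Omega>) * (s - \<tau>)
        = ipr \<Omega> r (\<lambda>x. 1)" .
    have "\<bar>ipr \<Omega> r (\<lambda>x. 1)\<bar> \<le> Hnorm \<Omega> r * C" using CS[OF Lr L1] by (simp add: C_def)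
    also have "\<dots> \<le> e1 * \<bar>s - \<tau>\<bar> * C" using hr C0 by (intro mult_right_mono) auto
    also have "\<dots> = (e1 * C) * \<bar>s - \<tau>\<bar>" by simp
    also have "\<dots> \<le> e * \<bar>s - \<tau>\<bar>" using e1(2) by (intro mult_right_mono) auto
    finally show "\<bar>(\<integral>x. 1 + f s x \<partial>lebesgue_on \<Omega>) - (\<integral>x. 1 + f \<tau> x \<partial>lebesgue_on \<Omega>) - (\<integral>x. df \<tau> x \<partial>lebesgue_on \<Omega>) * (s - \<tau>)\<bar>
        \<le> e * \<bar>s - \<tau>\<bar>" unfolding eq .
  qed
qed

end

lemma open_sets_lebesgue: "open A \<Longrightarrow> A \<in> sets lebesgue"
  by (metis borel_open sets_completionI_sets sets_lborel)

lemma time_int: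
  fixes \<Omega> :: "'a::euclidean_space set" and F :: "real \<Rightarrow> 'a \<Rightarrow> real"
  assumes \<Omega>o: "open \<Omega>" and s: "s \<in> {0..T}"
    and Fm: "(\<lambda>(x,t). F t x) \<in> borel_measurable (lebesgue_on (\<Omega> \<times> {0<..<T}))"
    and F0: "\<And>t x. 0 \<le> F t x"
    and Fi: "\<And>t. t \<in> {0..T} \<Longrightarrow> integrable (lebesgue_on \<Omega>) (F t)"
    and Fc: "continuous_on {0..T} (\<lambda>t. \<integral>x. F t x \<partial>lebesgue_on \<Omega>)"
  shows "(\<integral>p. (\<lambda>(x,t). F t x) p \<partial>lebesgue_on (\<Omega> \<times> {0<..<s})) = integral {0..s} (\<lambda>t. \<integral>x. F t x \<partial>lebesgue_on \<Omega>)"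
proof -
  define S where "S = \<Omega> \<times> {0<..<s}"
  define f where "f = (\<lambda>(x,t). F t x)"
  define q where "q t = (\<integral>x. F t x \<partial>lebesgue_on \<Omega>)" for t
  have Sl: "S \<in> sets lebesgue" unfolding S_def by (intro open_sets_lebesgue open_Times \<Omega>o) simp
  have \<Omega>l: "\<Omega> \<in> sets lebesgue" using open_sets_lebesgue[OF \<Omega>o] .
  have f0: "0 \<le> f p" for p by (simp add: f_def F0 split: prod.splits)
  have fm: "f \<in> borel_measurable (lebesgue_on S)"
    unfolding S_def f_def by (rule measurable_restrict_mono[OF Fm]) (use s in auto)
  have q0: "0 \<le> q t" for t unfolding q_def by (rule Bochner_Integration.integral_nonneg) (simp add: F0)
  have "integral\<^sup>L (lebesgue_on S) f = enn2real (\<integral>\<^sup>+ p. ennreal (f p) \<partial>lebesgue_on S)"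
    by (rule integral_eq_nn_integral[OF fm]) (simp add: f0)
  also have "(\<integral>\<^sup>+ p. ennreal (f p) \<partial>lebesgue_on S) = ennreal (integral {0..s} q)"
  proof -
    define h where "h p = indicator S p * f p" for p
    have hm: "h \<in> borel_measurable lebesgue"
      using fm Sl unfolding h_def by (simp add: borel_measurable_restrict_space_iff)
    obtain h' where h'm: "h' \<in> borel_measurable lborel" and hh': "AE p in lborel. h p = h' p"
      using completion_ex_borel_measurable_real[OF hm] by blast
    have e1: "(\<integral>\<^sup>+ p. ennreal (f p) \<partial>lebesgue_on S) = (\<integral>\<^sup>+ p. ennreal (h p) \<partial>lborel)"
    proof -
      have "(\<integral>\<^sup>+ p. ennreal (f p) \<partial>lebesgue_on S) = (\<integral>\<^sup>+ p. ennreal (f p) * indicator S p \<partial>lebesgue)"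
        using Sl by (simp add: nn_integral_restrict_space)
      also have "\<dots> = (\<integral>\<^sup>+ p. ennreal (h p) \<partial>lebesgue)"
        by (intro nn_integral_cong) (simp add: h_def indicator_def)
      also have "\<dots> = (\<integral>\<^sup>+ p. ennreal (h p) \<partial>lborel)" by (rule nn_integral_completion)
      finally show ?thesis .
    qed
    have e2: "(\<integral>\<^sup>+ p. ennreal (h p) \<partial>lborel) = (\<integral>\<^sup>+ p. ennreal (h' p) \<partial>lborel)"
      using hh' by (intro nn_integral_cong_AE) auto
    have h'm2: "(\<lambda>p. ennreal (h' p)) \<in> borel_measurable (lborel \<Otimes>\<^sub>M lborel)"
      by (subst lborel_prod) (use h'm in simp)
    have e3: "(\<integral>\<^sup>+ p. ennreal (h' p) \<partial>lborel) = (\<integral>\<^sup>+ t. (\<integral>\<^sup>+ x. ennreal (h' (x, t)) \<partial>lborel) \<partial>lborel)"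
      using lborel_pair.nn_integral_snd[OF h'm2] lborel_prod by metis
    obtain N where N: "{p \<in> space lborel. \<not> h p = h' p} \<subseteq> N" "emeasure lborel N = 0" "N \<in> sets lborel"
      using AE_E[OF hh'] by blast
    have aeN0: "AE p in lborel. p \<notin> N" using N by (intro AE_not_in) (simp add: null_sets_def)
    have "AE p in (lborel \<Otimes>\<^sub>M lborel). p \<notin> N" by (subst lborel_prod) (rule aeN0)
    then have "AE x in lborel. AE t in lborel. (x, t) \<notin> N" by (rule lborel_pair.AE_pair)
    moreover have "{p \<in> space (lborel \<Otimes>\<^sub>M lborel). (fst p, snd p) \<notin> N} \<in> sets (lborel \<Otimes>\<^sub>M lborel)"
    proof -
      have "{p \<in> space (lborel \<Otimes>\<^sub>M lborel). (fst p, snd p) \<notin> N} = space (lborel \<Otimes>\<^sub>M lborel) - N" by auto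
      also have "\<dots> \<in> sets (lborel \<Otimes>\<^sub>M lborel)" unfolding lborel_prod by (rule sets.compl_sets[OF N(3)])
      finally show ?thesis .
    qed
    ultimately have aeN: "AE t in lborel. AE x in lborel. (x, t) \<notin> N"
      using lborel_pair.AE_commute[of "\<lambda>x t. (x, t) \<notin> N"] by simp
    have inner: "(\<integral>\<^sup>+ x. ennreal (h (x, t)) \<partial>lborel) = ennreal (indicator {0<..<s} t * q t)" for t
    proof (cases "t \<in> {0<..<s}")
      case True
      then have t: "t \<in> {0..T}" using s by auto
      have "(\<integral>\<^sup>+ x. ennreal (h (x, t)) \<partial>lborel) = (\<integral>\<^sup>+ x. ennreal (h (x, t)) \<partial>lebesgue)"
        by (rule nn_integral_completion[symmetric])
      also have "\<dots> = (\<integral>\<^sup>+ x. ennreal (F t x) * indicator \<Omega> x \<partial>lebesgue)"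
        using True by (intro nn_integral_cong) (simp add: h_def f_def S_def indicator_def)
      also have "\<dots> = (\<integral>\<^sup>+ x. ennreal (F t x) \<partial>lebesgue_on \<Omega>)"
        using \<Omega>l by (simp add: nn_integral_restrict_space)
      also have "\<dots> = ennreal (q t)"
        unfolding q_def by (rule nn_integral_eq_integral[OF Fi[OF t]]) (simp add: F0)
      finally show ?thesis using True by simp
    next
      case False
      then have "h (x, t) = 0" for x by (auto simp: h_def S_def indicator_def)
      then show ?thesis using False by simp
    qed
    have e4: "(\<integral>\<^sup>+ t. (\<integral>\<^sup>+ x. ennreal (h' (x, t)) \<partial>lborel) \<partial>lborel)
        = (\<integral>\<^sup>+ t. ennreal (indicator {0<..<s} t * q t) \<partial>lborel)"
    proof (rule nn_integral_cong_AE)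
      show "AE t in lborel. (\<integral>\<^sup>+ x. ennreal (h' (x, t)) \<partial>lborel) = ennreal (indicator {0<..<s} t * q t)"
        using aeN
      proof (rule AE_mp, intro AE_I2 impI)
        fix t assume ae: "AE x in lborel. (x, t) \<notin> N"
        have "AE x in lborel. ennreal (h' (x, t)) = ennreal (h (x, t))"
          using ae
        proof (rule eventually_mono)
          fix x assume "(x, t) \<notin> N"
          then have "h (x, t) = h' (x, t)" using N(1) by auto
          then show "ennreal (h' (x, t)) = ennreal (h (x, t))" by simp
        qed
        then have "(\<integral>\<^sup>+ x. ennreal (h' (x, t)) \<partial>lborel) = (\<integral>\<^sup>+ x. ennreal (h (x, t)) \<partial>lborel)"
          by (rule nn_integral_cong_AE)
        then show "(\<integral>\<^sup>+ x. ennreal (h' (x, t)) \<partial>lborel) = ennreal (indicator {0<..<s} t * q t)"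
          using inner by simp
      qed
    qed
    have cq: "continuous_on {0..s} q" unfolding q_def[abs_def]
      by (rule continuous_on_subset[OF Fc]) (use s in auto)
    have hi: "(q has_integral integral {0..s} q) {0<..<s}"
    proof -
      have "q integrable_on {0<..<s}"
        using integrable_continuous_real[OF cq] integrable_on_open_interval[of q 0 s] by (simp add: box_real)
      moreover have "integral {0<..<s} q = integral {0..s} q"
        using integral_open_interval[of 0 s q] by (simp add: box_real)
      ultimately show ?thesis by (metis has_integral_integrable_integral)
    qed
    have e5: "(\<integral>\<^sup>+ t. ennreal (indicator {0<..<s} t * q t) \<partial>lborel) = ennreal (integral {0..s} q)"
      by (rule nn_integral_has_integral_lebesgue[OF _ hi]) (simp add: q0)
    show ?thesis using e1 e2 e3 e4 e5 by simp
  qed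
  also have "enn2real (ennreal (integral {0..s} q)) = integral {0..s} q"
  proof -
    have "0 \<le> integral {0..s} q"
      by (rule Henstock_Kurzweil_Integration.integral_nonneg)
         (use q0 integrable_continuous_real[OF continuous_on_subset[OF Fc[unfolded q_def[symmetric]]]] s in auto)
    then show ?thesis by simp
  qed
  finally show ?thesis by (simp add: S_def f_def q_def[abs_def])
qed

lemma Hnorm_rev:
  assumes "L2 \<Omega> a" "L2 \<Omega> b"
  shows "Hnorm \<Omega> a - Hnorm \<Omega> b \<le> Hnorm \<Omega> (\<lambda>x. a x - b x)"
proof -
  have "Hnorm \<Omega> a = Hnorm \<Omega> (\<lambda>x. (a x - b x) + b x)" by simp
  also have "\<dots> \<le> Hnorm \<Omega> (\<lambda>x. a x - b x) + Hnorm \<Omega> b"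
    by (rule Hnorm_add[OF L2_diff[OF assms] assms(2)])
  finally show ?thesis by linarith
qed

lemma CH_sqdiff_cont:
  assumes f: "CH \<Omega> T f" and g: "CH \<Omega> T g"
  shows "continuous_on {0..T} (\<lambda>t. \<integral>x. (f t x - g t x)\<^sup>2 \<partial>lebesgue_on \<Omega>)"
proof -
  define n where "n t = Hnorm \<Omega> (\<lambda>x. f t x - g t x)" for t
  have eq: "(\<integral>x. (f t x - g t x)\<^sup>2 \<partial>lebesgue_on \<Omega>) = (n t)\<^sup>2" for t
    by (simp add: n_def Hnorm_sq int_sq_ip)
  have "((\<lambda>s. n s) \<longlongrightarrow> n t) (at t within {0..T})" if t: "t \<in> {0..T}" for t
  proof -
    have lim: "((\<lambda>s. Hnorm \<Omega> (\<lambda>x. f s x - f t x) + Hnorm \<Omega> (\<lambda>x. g s x - g t x)) \<longlongrightarrow> 0) (at t within {0..T})"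
    proof -
      have l1: "((\<lambda>s. Hnorm \<Omega> (\<lambda>x. f s x - f t x)) \<longlongrightarrow> 0) (at t within {0..T})"
        using f t unfolding CH_def by blast
      have l2: "((\<lambda>s. Hnorm \<Omega> (\<lambda>x. g s x - g t x)) \<longlongrightarrow> 0) (at t within {0..T})"
        using g t unfolding CH_def by blast
      show ?thesis using tendsto_add[OF l1 l2] by simp
    qed
    have "\<forall>\<^sub>F s in at t within {0..T}. norm (n s - n t) \<le> Hnorm \<Omega> (\<lambda>x. f s x - f t x) + Hnorm \<Omega> (\<lambda>x. g s x - g t x)"
      using ev_within
    proof (rule eventually_mono)
      fix s assume s: "s \<in> {0..T}"
      have Ls: "L2 \<Omega> (\<lambda>x. f s x - g s x)" by (intro L2_diff CH_L2[OF f s] CH_L2[OF g s])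
      have Lt: "L2 \<Omega> (\<lambda>x. f t x - g t x)" by (intro L2_diff CH_L2[OF f t] CH_L2[OF g t])
      have D: "Hnorm \<Omega> (\<lambda>x. (f s x - g s x) - (f t x - g t x)) \<le> Hnorm \<Omega> (\<lambda>x. f s x - f t x) + Hnorm \<Omega> (\<lambda>x. g s x - g t x)"
      proof -
        have "(\<lambda>x. (f s x - g s x) - (f t x - g t x)) = (\<lambda>x. (f s x - f t x) - (g s x - g t x))"
          by (simp add: algebra_simps)
        then show ?thesis
          using Hnorm_diff[OF L2_diff[OF CH_L2[OF f s] CH_L2[OF f t]] L2_diff[OF CH_L2[OF g s] CH_L2[OF g t]]] by simp
      qed
      have D': "Hnorm \<Omega> (\<lambda>x. (f t x - g t x) - (f s x - g s x)) = Hnorm \<Omega> (\<lambda>x. (f s x - g s x) - (f t x - g t x))"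
      proof -
        have "Hnorm \<Omega> (\<lambda>x. (f t x - g t x) - (f s x - g s x)) = Hnorm \<Omega> (\<lambda>x. (-1) * ((f s x - g s x) - (f t x - g t x)))"
          by (rule arg_cong[where f="Hnorm \<Omega>"]) (rule ext, simp)
        also have "\<dots> = Hnorm \<Omega> (\<lambda>x. (f s x - g s x) - (f t x - g t x))"
          by (simp only: Hnorm_cmult)
        finally show ?thesis .
      qed
      show "norm (n s - n t) \<le> Hnorm \<Omega> (\<lambda>x. f s x - f t x) + Hnorm \<Omega> (\<lambda>x. g s x - g t x)"
        using Hnorm_rev[OF Ls Lt] Hnorm_rev[OF Lt Ls] D D' unfolding n_def by auto
    qed
    from Lim_null_comparison[OF this lim] show ?thesis by (simp add: LIM_zero_iff)
  qed
  then have "continuous_on {0..T} n"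
    by (simp add: continuous_on_eq_continuous_within continuous_within)
  then have "continuous_on {0..T} (\<lambda>t. (n t)\<^sup>2)" by (intro continuous_on_power)
  then show ?thesis unfolding eq .
qed

lemma time_term_deriv:
  fixes \<Omega> :: "'a::euclidean_space set"
  assumes \<Omega>o: "open \<Omega>" and \<tau>: "\<tau> \<in> {0..T}"
    and f: "CH \<Omega> T f" and g: "CH \<Omega> T g" and mf: "meas_Q \<Omega> T f" and mg: "meas_Q \<Omega> T g"
  shows "((\<lambda>s. \<integral>p. (\<lambda>(x,t). (f t x - g t x)\<^sup>2) p \<partial>lebesgue_on (\<Omega> \<times> {0<..<s})) has_real_derivative
           (\<integral>x. (f \<tau> x - g \<tau> x)\<^sup>2 \<partial>lebesgue_on \<Omega>)) (at \<tau> within {0..T})"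
proof -
  define q where "q t = (\<integral>x. (f t x - g t x)\<^sup>2 \<partial>lebesgue_on \<Omega>)" for t
  have cq: "continuous_on {0..T} q" unfolding q_def[abs_def] by (rule CH_sqdiff_cont[OF f g])
  have Fm: "(\<lambda>(x,t). (f t x - g t x)\<^sup>2) \<in> borel_measurable (lebesgue_on (\<Omega> \<times> {0<..<T}))"
  proof -
    have m1: "(\<lambda>(x,t). f t x) \<in> borel_measurable (lebesgue_on (\<Omega> \<times> {0<..<T}))" using mf by (simp add: meas_Q_def)
    have m2: "(\<lambda>(x,t). g t x) \<in> borel_measurable (lebesgue_on (\<Omega> \<times> {0<..<T}))" using mg by (simp add: meas_Q_def)
    have "(\<lambda>p. ((\<lambda>(x,t). f t x) p - (\<lambda>(x,t). g t x) p)\<^sup>2) \<in> borel_measurable (lebesgue_on (\<Omega> \<times> {0<..<T}))"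
      using m1 m2 by measurable
    moreover have "(\<lambda>p. ((\<lambda>(x,t). f t x) p - (\<lambda>(x,t). g t x) p)\<^sup>2) = (\<lambda>(x,t). (f t x - g t x)\<^sup>2)"
      by (auto split: prod.splits)
    ultimately show ?thesis by simp
  qed
  have eq: "(\<integral>p. (\<lambda>(x,t). (f t x - g t x)\<^sup>2) p \<partial>lebesgue_on (\<Omega> \<times> {0<..<s})) = integral {0..s} q"
    if s: "s \<in> {0..T}" for s
    unfolding q_def[abs_def]
  proof (rule time_int[OF \<Omega>o s Fm])
    show "\<And>t x. 0 \<le> (f t x - g t x)\<^sup>2" by simp
    show "\<And>t. t \<in> {0..T} \<Longrightarrow> integrable (lebesgue_on \<Omega>) (\<lambda>x. (f t x - g t x)\<^sup>2)"
      by (intro L2_sq L2_diff CH_L2[OF f] CH_L2[OF g])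
    show "continuous_on {0..T} (\<lambda>t. \<integral>x. (f t x - g t x)\<^sup>2 \<partial>lebesgue_on \<Omega>)"
      using cq unfolding q_def[abs_def] .
  qed
  have "((\<lambda>s. integral {0..s} q) has_real_derivative q \<tau>) (at \<tau> within {0..T})"
    by (rule integral_has_real_derivative[OF cq \<tau>])
  then have "((\<lambda>s. \<integral>p. (\<lambda>(x,t). (f t x - g t x)\<^sup>2) p \<partial>lebesgue_on (\<Omega> \<times> {0<..<s})) has_real_derivative q \<tau>) (at \<tau> within {0..T})"
  proof (rule has_field_derivative_transform_within[where d=1])
    show "0 < (1::real)" by simp
    show "\<tau> \<in> {0..T}" using \<tau> .
    fix s assume "s \<in> {0..T}" "dist s \<tau> < 1"
    then show "integral {0..s} q = (\<integral>p. (\<lambda>(x,t). (f t x - g t x)\<^sup>2) p \<partial>lebesgue_on (\<Omega> \<times> {0<..<s}))"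
      using eq by simp
  qed
  then show ?thesis by (simp add: q_def)
qed

theorem theorem3p8:
  fixes \<Omega> :: "(real^3) set" and T \<alpha> \<beta> \<tau>s \<tau> :: real and b :: "nat \<Rightarrow> real"
    and \<phi>Q \<sigma>Q d\<phi>Q d\<sigma>Q u us uS \<mu> \<phi> \<sigma> d\<mu> d\<phi> d\<sigma> :: "real \<Rightarrow> real^3 \<Rightarrow> real"
    and \<phi>\<Omega> \<mu>0 \<phi>0 \<sigma>0 :: "real^3 \<Rightarrow> real"
    and P pih :: "real \<Rightarrow> real" and Bh :: "real \<Rightarrow> ereal" and rm rp :: ereal
  assumes dom: "smooth_bounded_domain \<Omega>" and T: "T > 0"
    and \<alpha>: "\<alpha> > 0" and \<beta>: "\<beta> > 0"
    and b_nonneg: "\<forall>k\<le>6. b k \<ge> 0" and b_nonzero: "\<exists>k\<le>6. b k \<noteq> 0"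
    and \<phi>Q_L2: "L2Q \<Omega> T \<phi>Q" and \<sigma>Q_L2: "L2Q \<Omega> T \<sigma>Q" and \<phi>\<Omega>_L2: "L2 \<Omega> \<phi>\<Omega>"
    and \<tau>s: "\<tau>s \<in> {0..T}"
    \<comment> \<open>assumptions on P\<close>
    and P_C2: "Ck_on 2 UNIV P" and P_nonneg: "\<forall>r. P r \<ge> 0"
    and P_bdd: "\<exists>C. \<forall>r. \<bar>P r\<bar> \<le> C" and P'_bdd: "\<exists>C. \<forall>r. \<bar>deriv P r\<bar> \<le> C"
    and P_lip: "\<exists>L. L-lipschitz_on UNIV P"
    \<comment> \<open>assumptions on F = B_hat + pi_hat\<close>
    and F_nonneg: "\<forall>r. Bh r + ereal (pih r) \<ge> 0"
    and Bh_range: "\<forall>r. Bh r \<ge> 0" and Bh_convex: "ereal_convex Bh" and Bh_lsc: "ereal_lsc Bh"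
    and Bh0: "Bh 0 = 0"
    and pih_C3: "Ck_on 3 UNIV pih" and pi_lip: "\<exists>L. L-lipschitz_on UNIV (deriv pih)"
    and B_dom: "subdiff_dom Bh = ereal_interval rm rp" and rm: "rm < 0" and rp: "0 < rp"
    and F_C3: "Ck_on 3 (ereal_interval rm rp) (\<lambda>r. real_of_ereal (Bh r + ereal (pih r)))"
    and F'_rp: "filterlim (Fprime Bh pih) at_top (left_filter rp)"
    and F'_rm: "filterlim (Fprime Bh pih) at_bot (right_filter rm)"
    \<comment> \<open>initial data\<close>
    and \<phi>0_W: "Wsp \<Omega> \<phi>0" and \<mu>0_V: "H1 \<Omega> \<mu>0" and \<mu>0_Linf: "Linf \<Omega> \<mu>0" and \<sigma>0_V: "H1 \<Omega> \<sigma>0"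
    and F\<phi>0_L1: "integrable (lebesgue_on \<Omega>) (\<lambda>x. real_of_ereal (Bh (\<phi>0 x) + ereal (pih (\<phi>0 x))))"
    and \<phi>0_range: "\<exists>a c. rm < ereal a \<and> ereal c < rp \<and> (AE x in lebesgue_on \<Omega>. a \<le> \<phi>0 x \<and> \<phi>0 x \<le> c)"
    \<comment> \<open>control box\<close>
    and us_Linf: "LinfQ \<Omega> T us" and uS_Linf: "LinfQ \<Omega> T uS"
    and us_le_uS: "AE p in lebesgue_on (\<Omega> \<times> {0<..<T}). (\<lambda>(x,t). us t x \<le> uS t x) p"
    \<comment> \<open>additional assumptions of the theorem\<close>
    and extra_V: "H1 \<Omega> (\<lambda>x. (\<mu>0 x + lap \<Omega> \<phi>0 x - deriv (\<lambda>r. real_of_ereal (Bh r)) (\<phi>0 x)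
                                - deriv pih (\<phi>0 x)) / \<beta>)"
    and \<phi>Q_H1: "H1tH \<Omega> T \<phi>Q d\<phi>Q" and \<sigma>Q_H1: "H1tH \<Omega> T \<sigma>Q d\<sigma>Q"
    and \<phi>Q_cont: "CH \<Omega> T \<phi>Q" and \<sigma>Q_cont: "CH \<Omega> T \<sigma>Q"
    \<comment> \<open>admissible control pair (u, tau)\<close>
    and u_Linf: "LinfQ \<Omega> T u"
    and u_ad: "AE p in lebesgue_on (\<Omega> \<times> {0<..<T}). (\<lambda>(x,t). us t x \<le> u t x \<and> u t x \<le> uS t x) p"
    and \<tau>: "\<tau> \<in> {0..T}"
    \<comment> \<open>(mu, phi, sigma) = S(u), taken with its time-continuous representatives\<close>
    and state: "state_sol \<Omega> T \<alpha> \<beta> P Bh pih rm rp \<mu>0 \<phi>0 \<sigma>0 u \<mu> \<phi> \<sigma> d\<mu> d\<phi> d\<sigma>"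
    and cont: "CH \<Omega> T \<mu>" "CH \<Omega> T \<phi>" "CH \<Omega> T \<sigma>" "CH \<Omega> T d\<phi>"
  shows "((\<lambda>s. cost \<Omega> T b \<phi>Q \<sigma>Q \<phi>\<Omega> \<tau>s \<phi> \<sigma> u s) has_real_derivative
           (b 1 / 2 * (\<integral>x. (\<phi> \<tau> x - \<phi>Q \<tau> x)\<^sup>2 \<partial>lebesgue_on \<Omega>)
          + b 2 * (\<integral>x. (\<phi> \<tau> x - \<phi>\<Omega> x) * d\<phi> \<tau> x \<partial>lebesgue_on \<Omega>)
          + b 3 / 2 * (\<integral>x. (\<sigma> \<tau> x - \<sigma>Q \<tau> x)\<^sup>2 \<partial>lebesgue_on \<Omega>)
          + b 4 / 2 * (\<integral>x. d\<phi> \<tau> x \<partial>lebesgue_on \<Omega>)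
          + b 5 + b 6 * (\<tau> - \<tau>s))) (at \<tau> within {0..T})"
proof -
  have \<Omega>o: "open \<Omega>" and \<Omega>b: "bounded \<Omega>" using dom by (auto simp: smooth_bounded_domain_def)
  have \<Omega>m: "\<Omega> \<in> sets lebesgue" using open_sets_lebesgue[OF \<Omega>o] .
  have \<Omega>borel: "\<Omega> \<in> sets lborel" using \<Omega>o by (simp add: borel_open)
  have fin: "emeasure lebesgue \<Omega> < \<infinity>"
    using emeasure_bounded_finite[OF \<Omega>b] \<Omega>borel \<Omega>m by (simp add: emeasure_completion main_part_sets)
  have td: "tderiv \<Omega> T \<phi> d\<phi>" using state by (simp add: state_sol_def)
  have m\<phi>: "meas_Q \<Omega> T \<phi>" using state by (simp add: state_sol_def Linft_def)
  have m\<sigma>: "meas_Q \<Omega> T \<sigma>" using state by (simp add: state_sol_def Linft_def)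
  have m\<phi>Q: "meas_Q \<Omega> T \<phi>Q" using \<phi>Q_L2 by (simp add: L2Q_def)
  have m\<sigma>Q: "meas_Q \<Omega> T \<sigma>Q" using \<sigma>Q_L2 by (simp add: L2Q_def)
  note CH\<phi> = cont(2) and CH\<sigma> = cont(3) and CHd = cont(4)
  have d1: "((\<lambda>s. \<integral>p. (\<lambda>(x,t). (\<phi> t x - \<phi>Q t x)\<^sup>2) p \<partial>lebesgue_on (\<Omega> \<times> {0<..<s})) has_real_derivative
           (\<integral>x. (\<phi> \<tau> x - \<phi>Q \<tau> x)\<^sup>2 \<partial>lebesgue_on \<Omega>)) (at \<tau> within {0..T})"
    by (rule time_term_deriv[OF \<Omega>o \<tau> CH\<phi> \<phi>Q_cont m\<phi> m\<phi>Q])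
  have d3: "((\<lambda>s. \<integral>p. (\<lambda>(x,t). (\<sigma> t x - \<sigma>Q t x)\<^sup>2) p \<partial>lebesgue_on (\<Omega> \<times> {0<..<s})) has_real_derivative
           (\<integral>x. (\<sigma> \<tau> x - \<sigma>Q \<tau> x)\<^sup>2 \<partial>lebesgue_on \<Omega>)) (at \<tau> within {0..T})"
    by (rule time_term_deriv[OF \<Omega>o \<tau> CH\<sigma> \<sigma>Q_cont m\<sigma> m\<sigma>Q])
  have d2: "((\<lambda>s. \<integral>x. (\<phi> s x - \<phi>\<Omega> x)\<^sup>2 \<partial>lebesgue_on \<Omega>) has_real_derivative
           2 * (\<integral>x. (\<phi> \<tau> x - \<phi>\<Omega> x) * d\<phi> \<tau> x \<partial>lebesgue_on \<Omega>)) (at \<tau> within {0..T})"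
    by (rule deriv_sqnorm[OF \<Omega>m fin T CH\<phi> CHd td \<phi>\<Omega>_L2 \<tau>])
  have d4: "((\<lambda>s. \<integral>x. 1 + \<phi> s x \<partial>lebesgue_on \<Omega>) has_real_derivative
           (\<integral>x. d\<phi> \<tau> x \<partial>lebesgue_on \<Omega>)) (at \<tau> within {0..T})"
    by (rule deriv_mean[OF \<Omega>m fin T CH\<phi> CHd td \<tau>])
  have dsq: "((\<lambda>s. (s - \<tau>s)\<^sup>2) has_real_derivative 2 * (\<tau> - \<tau>s)) (at \<tau> within {0..T})"
    by (auto intro!: derivative_eq_intros)
  have D: "((\<lambda>s. cost \<Omega> T b \<phi>Q \<sigma>Q \<phi>\<Omega> \<tau>s \<phi> \<sigma> u s) has_real_derivative
      (b 1 / 2 * (\<integral>x. (\<phi> \<tau> x - \<phi>Q \<tau> x)\<^sup>2 \<partial>lebesgue_on \<Omega>)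
     + b 2 / 2 * (2 * (\<integral>x. (\<phi> \<tau> x - \<phi>\<Omega> x) * d\<phi> \<tau> x \<partial>lebesgue_on \<Omega>))
     + b 3 / 2 * (\<integral>x. (\<sigma> \<tau> x - \<sigma>Q \<tau> x)\<^sup>2 \<partial>lebesgue_on \<Omega>)
     + b 4 / 2 * (\<integral>x. d\<phi> \<tau> x \<partial>lebesgue_on \<Omega>)
     + b 5 * 1 + b 6 / 2 * (2 * (\<tau> - \<tau>s)) + 0)) (at \<tau> within {0..T})"
    unfolding cost_def
    by (intro DERIV_add DERIV_cmult d1 d2 d3 d4 dsq DERIV_ident DERIV_const)
  show ?thesis
    by (rule DERIV_cong[OF D]) (simp add: algebra_simps)
qed

end
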